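(* Let $n,a,b$ be positive integers, $c$ a nonnegative integer and $0\le k\le n$ an integer. Then $$\Psi_n(k,a,b,c)=\binom{n}{k}M_n(a,b,c)\prod_{j=1}^{k}\frac{a-1+(n-j)\frac c2}{b+(j-1)\frac c2}.$$
   Context: All constant terms are taken with $\operatorname{CT}_x=\operatorname{CT}_{x_n}\cdots\operatorname{CT}_{x_1}$ (iterated constant-term extraction), where $(1-x_i)^{-b}$ and $x_i/(1-x_i)$ are expanded as power series in $x_i$, and for $i<j$, $(x_j-x_i)^{-c}=x_j^{-c}(1-x_i/x_j)^{-c}$ is expanded as a power series in $x_i/x_j$. $$M_n(a,b,c):=\operatorname{CT}_x\prod_{i=1}^n(1-x_i)^{-b}x_i^{-a+1}\prod_{1\le i<j\le n}(x_j-x_i)^{-c},$$ $$\Psi_n(k,a,b,c):=\operatorname{CT}_x[t^k]\prod_{i=1}^n(1-x_i)^{-b}x_i^{-a+1}\Big(1+t\frac{x_i}{1-x_i}\Big)\prod_{1\le i<j\le n}(x_j-x_i)^{-c},$$ with $[t^k]$ denoting the coefficient of $t^k$. *)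

theory Defs
  imports Complex_Main
begin

text \<open>Coefficient of y^m in the power series expansion of (1 - y)^(-beta):
  beta (beta+1) ... (beta+m-1) / m!  (equal to 1 for m = 0, and 0 for beta = 0, m > 0).\<close>
definition nb :: "nat \<Rightarrow> nat \<Rightarrow> real" where
  "nb beta m = pochhammer (real beta) m / fact m"

text \<open>Variables are x_0, ..., x_(n-1) (0-based).  Expanding
  (1-x_i)^(-b) = sum over m_i of nb b m_i x_i^m_i and, for i<j,
  (x_j - x_i)^(-c) = sum over p_ij of nb c p_ij x_i^p_ij x_j^(-c-p_ij),
  a monomial of the product is indexed by (m,p) (extended by 0 outside the range).
  The exponent of x_k in the monomial indexed by (m,p) (times x_k^(r_k) from an
  extra factor) is given below; the iterated constant term is the sum of the
  coefficients of all monomials in which every exponent vanishes.\<close>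
definition xexp :: "nat \<Rightarrow> nat \<Rightarrow> nat \<Rightarrow> (nat \<Rightarrow> nat) \<Rightarrow> (nat \<Rightarrow> nat) \<Rightarrow> (nat \<Rightarrow> nat \<Rightarrow> nat) \<Rightarrow> nat \<Rightarrow> int" where
  "xexp n a c m r p k =
     int (m k) + int (r k) + 1 - int a
     + (\<Sum>j\<in>{k<..<n}. int (p k j)) - (\<Sum>i<k. int c + int (p i k))"

definition M_index :: "nat \<Rightarrow> nat \<Rightarrow> nat \<Rightarrow> ((nat \<Rightarrow> nat) \<times> (nat \<Rightarrow> nat \<Rightarrow> nat)) set" where
  "M_index n a c = {(m, p).
      (\<forall>i. n \<le> i \<longrightarrow> m i = 0) \<and>
      (\<forall>i j. \<not> (i < j \<and> j < n) \<longrightarrow> p i j = 0) \<and>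
      (\<forall>k<n. xexp n a c m (\<lambda>_. 0) p k = 0)}"

definition Mn :: "nat \<Rightarrow> nat \<Rightarrow> nat \<Rightarrow> nat \<Rightarrow> real" where
  "Mn n a b c = (\<Sum>(m, p)\<in>M_index n a c.
      (\<Prod>i<n. nb b (m i)) * (\<Prod>j<n. \<Prod>i<j. nb c (p i j)))"

text \<open>For Psi, each factor (1 + t x_i/(1-x_i)) = 1 + sum over r>=1 of t x_i^r contributes
  x_i^(r_i) t^[r_i > 0] with coefficient 1; taking [t^k] means exactly k of the r_i are positive.\<close>
definition Psi_index :: "nat \<Rightarrow> nat \<Rightarrow> nat \<Rightarrow> nat \<Rightarrow>
    ((nat \<Rightarrow> nat) \<times> (nat \<Rightarrow> nat) \<times> (nat \<Rightarrow> nat \<Rightarrow> nat)) set" where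
  "Psi_index n k a c = {(m, r, p).
      (\<forall>i. n \<le> i \<longrightarrow> m i = 0 \<and> r i = 0) \<and>
      (\<forall>i j. \<not> (i < j \<and> j < n) \<longrightarrow> p i j = 0) \<and>
      card {i. i < n \<and> 0 < r i} = k \<and>
      (\<forall>i<n. xexp n a c m r p i = 0)}"

definition Psi :: "nat \<Rightarrow> nat \<Rightarrow> nat \<Rightarrow> nat \<Rightarrow> nat \<Rightarrow> real" where
  "Psi n k a b c = (\<Sum>(m, r, p)\<in>Psi_index n k a c.
      (\<Prod>i<n. nb b (m i)) * (\<Prod>j<n. \<Prod>i<j. nb c (p i j)))"

end

theory Submission
  imports Defs "HOL-Computational_Algebra.Formal_Power_Series"
begin

unbundle fps_syntax

definition fs :: "(nat \<Rightarrow> nat) \<Rightarrow> bool" where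
  "fs g \<longleftrightarrow> finite {i. g i \<noteq> 0}"

definition vadd :: "(nat \<Rightarrow> nat) \<Rightarrow> (nat \<Rightarrow> nat) \<Rightarrow> nat \<Rightarrow> nat" where
  "vadd u v = (\<lambda>i. u i + v i)"

lemma fs_le: "fs g \<Longrightarrow> u \<le> g \<Longrightarrow> fs u"
proof -
  assume "fs g" "u \<le> g"
  then have "{i. u i \<noteq> 0} \<subseteq> {i. g i \<noteq> 0}" by (auto simp: le_fun_def) (metis order_less_le_trans)
  then show "fs u" using \<open>fs g\<close> unfolding fs_def by (rule finite_subset)
qed

lemma fs_diff: "fs g \<Longrightarrow> fs (g - u)"
  unfolding fs_def fun_diff_def
  by (rule finite_subset[of _ "{i. g i \<noteq> 0}"]) auto

lemma fs_vadd: "fs u \<Longrightarrow> fs v \<Longrightarrow> fs (vadd u v)"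
  unfolding fs_def vadd_def
  by (rule finite_subset[of _ "{i. u i \<noteq> 0} \<union> {i. v i \<noteq> 0}"]) auto

lemma fs_vadd_iff: "fs (vadd u v) \<longleftrightarrow> fs u \<and> fs v"
proof
  assume "fs (vadd u v)"
  then show "fs u \<and> fs v"
    using fs_le[of "vadd u v" u] fs_le[of "vadd u v" v] by (auto simp: le_fun_def vadd_def)
qed (simp add: fs_vadd)

lemma finite_below: "fs g \<Longrightarrow> finite {u. u \<le> g}"
proof -
  assume fg: "fs g"
  let ?A = "{i. g i \<noteq> 0}"
  have finA: "finite ?A" using fg unfolding fs_def .
  have fr: "finite (g ` ?A)" using finA by simp
  have "{u. u \<le> g} \<subseteq> {f. \<forall>x. (x \<in> ?A \<longrightarrow> f x \<in> {..Max (g ` ?A)}) \<and> (x \<notin> ?A \<longrightarrow> f x = 0)}"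
  proof
    fix u assume "u \<in> {u. u \<le> g}"
    then have u: "\<And>x. u x \<le> g x" by (simp add: le_fun_def)
    have "u x \<le> Max (g ` ?A)" if "x \<in> ?A" for x
      using Max_ge[OF fr, of "g x"] that u[of x] by auto
    moreover have "u x = 0" if "x \<notin> ?A" for x
      using that u[of x] by auto
    ultimately show "u \<in> {f. \<forall>x. (x \<in> ?A \<longrightarrow> f x \<in> {..Max (g ` ?A)}) \<and> (x \<notin> ?A \<longrightarrow> f x = 0)}"
      by auto
  qed
  moreover have "finite {f. \<forall>x. (x \<in> ?A \<longrightarrow> f x \<in> {..Max (g ` ?A)}) \<and> (x \<notin> ?A \<longrightarrow> f x = (0::nat))}"
    using finA by (intro finite_set_of_finite_funs) auto
  ultimately show ?thesis by (rule finite_subset)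
qed

typedef ps = "{f :: (nat \<Rightarrow> nat) \<Rightarrow> real. \<forall>g. \<not> fs g \<longrightarrow> f g = 0}"
  morphisms cf Abs_ps
  by (rule exI[of _ "\<lambda>_. 0"]) auto

setup_lifting type_definition_ps

lemma cf_nfs: "\<not> fs g \<Longrightarrow> cf f g = 0"
  using cf by auto

lemma ps_eqI: "(\<And>g. fs g \<Longrightarrow> cf f g = cf h g) \<Longrightarrow> f = h"
  by (metis cf_inject cf_nfs ext)

definition conv :: "((nat \<Rightarrow> nat) \<Rightarrow> real) \<Rightarrow> ((nat \<Rightarrow> nat) \<Rightarrow> real) \<Rightarrow> (nat \<Rightarrow> nat) \<Rightarrow> real" where
  "conv f h g = (if fs g then (\<Sum>u\<in>{u. u \<le> g}. f u * h (g - u)) else 0)"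

instantiation ps :: comm_ring_1
begin
lift_definition zero_ps :: ps is "\<lambda>_. 0" by simp
lift_definition one_ps :: ps is "\<lambda>g. if g = (\<lambda>_. 0) then 1 else 0" by (auto simp: fs_def)
lift_definition plus_ps :: "ps \<Rightarrow> ps \<Rightarrow> ps" is "\<lambda>f h g. f g + h g" by simp
lift_definition minus_ps :: "ps \<Rightarrow> ps \<Rightarrow> ps" is "\<lambda>f h g. f g - h g" by simp
lift_definition uminus_ps :: "ps \<Rightarrow> ps" is "\<lambda>f g. - f g" by simp
lift_definition times_ps :: "ps \<Rightarrow> ps \<Rightarrow> ps" is conv by (simp add: conv_def)

lemma cf_times: "cf (f * h) g = (if fs g then (\<Sum>u\<in>{u. u \<le> g}. cf f u * cf h (g - u)) else 0)"
  by transfer (simp add: conv_def)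

lemma diff_le_fun: "u \<le> (g::nat\<Rightarrow>nat) \<Longrightarrow> g - (g - u) = u"
  by (auto simp: le_fun_def fun_diff_def)

lemma mult_comm_aux: "fs g \<Longrightarrow> (\<Sum>u\<in>{u. u \<le> g}. cf f u * cf h (g - u)) = (\<Sum>u\<in>{u. u \<le> g}. cf h u * cf f (g - u))"
  apply (rule sum.reindex_bij_witness[of _ "\<lambda>u. g - u" "\<lambda>u. g - u"])
  by (auto simp: diff_le_fun le_fun_def fun_diff_def)

lemma mult_assoc_aux:
  fixes F :: "_ \<Rightarrow> _ \<Rightarrow> real"
  assumes g: "fs g"
  shows "(\<Sum>s\<in>{s. s \<le> g}. (\<Sum>u\<in>{u. u \<le> s}. F u (s - u)) * H (g - s))
       = (\<Sum>u\<in>{u. u \<le> g}. (\<Sum>v\<in>{v. v \<le> g - u}. F u v * H (g - u - v)))"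
proof -
  have fin: "finite {s. s \<le> g}" using g finite_below by blast
  have fin1: "\<forall>s\<in>{s. s \<le> g}. finite {u. u \<le> s}"
    using g by (auto intro: finite_below fs_le)
  have fin2: "\<forall>u\<in>{u. u \<le> g}. finite {v. v \<le> g - u}"
    using g by (auto intro: finite_below fs_diff)
  have "(\<Sum>s\<in>{s. s \<le> g}. (\<Sum>u\<in>{u. u \<le> s}. F u (s - u)) * H (g - s))
      = (\<Sum>s\<in>{s. s \<le> g}. (\<Sum>u\<in>{u. u \<le> s}. F u (s - u) * H (g - s)))"
    by (simp add: sum_distrib_right)
  also have "\<dots> = (\<Sum>(s,u)\<in>Sigma {s. s \<le> g} (\<lambda>s. {u. u \<le> s}). F u (s - u) * H (g - s))"
    by (rule sum.Sigma[OF fin fin1])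
  also have "\<dots> = (\<Sum>(u,v)\<in>Sigma {u. u \<le> g} (\<lambda>u. {v. v \<le> g - u}). F u v * H (g - u - v))"
    apply (rule sum.reindex_bij_witness[of _ "\<lambda>(u,v). (vadd u v, u)" "\<lambda>(s,u). (u, s - u)"])
    subgoal for p by (cases p) (auto simp: vadd_def fun_diff_def le_fun_def fun_eq_iff)
    subgoal for p by (cases p) (auto simp: fun_diff_def le_fun_def intro: order_trans diff_le_mono)
    subgoal for p by (cases p) (auto simp: vadd_def fun_diff_def)
    subgoal for p
    proof (cases p)
      case (Pair u v)
      assume "p \<in> Sigma {u. u \<le> g} (\<lambda>u. {v. v \<le> g - u})"
      then have "u i + v i \<le> g i" for i using Pair by (auto simp: le_fun_def fun_diff_def) (metis le_diff_conv2 add.commute le_add2 order_trans)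
      then show ?thesis using Pair by (auto simp: vadd_def le_fun_def)
    qed
    subgoal for p
    proof (cases p)
      case (Pair s u)
      assume "p \<in> Sigma {s. s \<le> g} (\<lambda>s. {u. u \<le> s})"
      then have "u \<le> s" using Pair by auto
      then have "g - u - (s - u) = g - s" by (auto simp: fun_diff_def le_fun_def fun_eq_iff)
      then show ?thesis using Pair by simp
    qed
    done
  also have "\<dots> = (\<Sum>u\<in>{u. u \<le> g}. (\<Sum>v\<in>{v. v \<le> g - u}. F u v * H (g - u - v)))"
    by (rule sum.Sigma[OF fin fin2, symmetric])
  finally show ?thesis .
qed

lemma psax1: fixes a b c :: ps shows "a * b * c = a * (b * c)"
proof (rule ps_eqI)
  fix g assume g: "fs g"
  have "cf (a * b * c) g = (\<Sum>s\<in>{s. s \<le> g}. cf (a * b) s * cf c (g - s))"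
    using g by (simp only: cf_times if_True)
  also have "\<dots> = (\<Sum>s\<in>{s. s \<le> g}. (\<Sum>u\<in>{u. u \<le> s}. cf a u * cf b (s - u)) * cf c (g - s))"
    apply (rule sum.cong[OF refl])
    subgoal for s using fs_le[OF g, of s] by (simp only: cf_times mem_Collect_eq if_True)
    done
  also have "\<dots> = (\<Sum>u\<in>{u. u \<le> g}. (\<Sum>v\<in>{v. v \<le> g - u}. cf a u * cf b v * cf c (g - u - v)))"
    by (rule mult_assoc_aux[OF g])
  also have "\<dots> = (\<Sum>u\<in>{u. u \<le> g}. cf a u * cf (b * c) (g - u))"
    apply (rule sum.cong[OF refl])
    subgoal for u using fs_diff[OF g, of u] by (simp add: cf_times sum_distrib_left mult.assoc diff_diff_eq)
    done
  also have "\<dots> = cf (a * (b * c)) g"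
    using g by (simp only: cf_times if_True)
  finally show "cf (a * b * c) g = cf (a * (b * c)) g" .
qed
lemma psax2: fixes a b c :: ps shows "a * b = b * a"
proof (rule ps_eqI)
  fix g assume g: "fs g"
  show "cf (a * b) g = cf (b * a) g"
    using g mult_comm_aux[OF g, of a b] by (simp only: cf_times if_True)
qed
lemma psax3: fixes a b c :: ps shows "1 * a = a"
proof (rule ps_eqI)
  fix g assume g: "fs g"
  have "cf (1 * a) g = (\<Sum>u\<in>{u. u \<le> g}. (if u = (\<lambda>_. 0) then cf a (g - u) else 0))"
    using g by (simp add: cf_times one_ps.rep_eq) (intro sum.cong; simp)
  also have "\<dots> = cf a g"
    apply (subst sum.delta)
     apply (rule finite_below[OF g])
    by (simp add: le_fun_def fun_diff_def)
  finally show "cf (1 * a) g = cf a g" .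
qed
lemma psax4: fixes a b c :: ps shows "(a + b) * c = a * c + b * c"
  by (rule ps_eqI) (simp add: cf_times plus_ps.rep_eq distrib_right sum.distrib)
lemma psax5: fixes a b c :: ps shows "(0::ps) \<noteq> 1"
proof
  assume "(0::ps) = 1"
  then have "cf 0 (\<lambda>_. 0) = cf 1 (\<lambda>_. 0)" by simp
  then show False by (simp add: one_ps.rep_eq zero_ps.rep_eq)
qed
lemma psax6: fixes a b c :: ps shows "a + b + c = a + (b + c)" by (rule ps_eqI) (simp add: plus_ps.rep_eq)
lemma psax7: fixes a b c :: ps shows "a + b = b + a" by (rule ps_eqI) (simp add: plus_ps.rep_eq)
lemma psax8: fixes a b c :: ps shows "0 + a = a" by (rule ps_eqI) (simp add: plus_ps.rep_eq zero_ps.rep_eq)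
lemma psax9: fixes a b c :: ps shows "- a + a = 0" by (rule ps_eqI) (simp add: plus_ps.rep_eq zero_ps.rep_eq uminus_ps.rep_eq)
lemma psax10: fixes a b c :: ps shows "a - b = a + - b" by (rule ps_eqI) (simp add: plus_ps.rep_eq minus_ps.rep_eq uminus_ps.rep_eq)

instance
  by (standard; (rule psax1 psax2 psax3 psax4 psax5 psax6 psax7 psax8 psax9 psax10))
end
lemma cf_plus[simp]: "cf (f + h) g = cf f g + cf h g" by transfer simp
lemma cf_minus[simp]: "cf (f - h) g = cf f g - cf h g" by transfer simp
lemma cf_uminus[simp]: "cf (- f) g = - cf f g" by transfer simp
lemma cf_zero[simp]: "cf 0 g = 0" by transfer simp
lemma cf_one: "cf 1 g = (if g = (\<lambda>_. 0) then 1 else 0)" by transfer simp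

lemma cf_sum: "cf (sum f A) g = (\<Sum>a\<in>A. cf (f a) g)"
  by (induction A rule: infinite_finite_induct) auto


lift_definition dop :: "((nat \<Rightarrow> nat) \<Rightarrow> real) \<Rightarrow> ps \<Rightarrow> ps" is "\<lambda>l f g. l g * f g" by simp

lemma cf_dop[simp]: "cf (dop l f) g = l g * cf f g" by transfer simp

definition addl :: "((nat \<Rightarrow> nat) \<Rightarrow> real) \<Rightarrow> bool" where
  "addl l \<longleftrightarrow> (\<forall>u v. l (vadd u v) = l u + l v)"

lemma addl_zero: "addl l \<Longrightarrow> l (\<lambda>_. 0) = 0"
proof -
  assume "addl l"
  then have "l (vadd (\<lambda>_. 0) (\<lambda>_. 0)) = l (\<lambda>_. 0) + l (\<lambda>_. 0)" unfolding addl_def by blast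
  moreover have "vadd (\<lambda>_. 0) (\<lambda>_. 0) = (\<lambda>_. 0::nat)" by (simp add: vadd_def)
  ultimately show ?thesis by simp
qed

lemma dop_add: "dop l (f + h) = dop l f + dop l h"
  by (rule ps_eqI) (simp add: algebra_simps)
lemma dop_diff: "dop l (f - h) = dop l f - dop l h"
  by (rule ps_eqI) (simp add: algebra_simps)
lemma dop_sum: "dop l (sum f A) = (\<Sum>a\<in>A. dop l (f a))"
  by (rule ps_eqI) (simp add: cf_sum sum_distrib_left)

lemma dop_mult:
  assumes "addl l"
  shows "dop l (f * h) = dop l f * h + f * dop l h"
proof (rule ps_eqI)
  fix g assume g: "fs g"
  have "cf (dop l (f * h)) g = (\<Sum>u\<in>{u. u \<le> g}. l g * (cf f u * cf h (g - u)))"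
    using g by (simp add: cf_times sum_distrib_left)
  also have "\<dots> = (\<Sum>u\<in>{u. u \<le> g}. (l u * cf f u) * cf h (g - u) + cf f u * (l (g - u) * cf h (g - u)))"
  proof (rule sum.cong[OF refl])
    fix u assume "u \<in> {u. u \<le> g}"
    then have "g = vadd u (g - u)" by (auto simp: vadd_def fun_diff_def le_fun_def fun_eq_iff)
    then have "l g = l u + l (g - u)" using assms unfolding addl_def by metis
    then show "l g * (cf f u * cf h (g - u)) = (l u * cf f u) * cf h (g - u) + cf f u * (l (g - u) * cf h (g - u))"
      by (simp add: algebra_simps)
  qed
  also have "\<dots> = cf (dop l f * h + f * dop l h) g"
    using g by (simp add: cf_times sum.distrib)
  finally show "cf (dop l (f * h)) g = cf (dop l f * h + f * dop l h) g" .
qed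

lemma dop_prod:
  assumes "addl l" "finite A" "\<And>a. a \<in> A \<Longrightarrow> dop l (F a) = F a * H a"
  shows "dop l (\<Prod>a\<in>A. F a) = (\<Prod>a\<in>A. F a) * (\<Sum>a\<in>A. H a)"
  using assms(2,3)
proof (induction A rule: finite_induct)
  case empty
  have "dop l 1 = 0" using addl_zero[OF assms(1)] by (intro ps_eqI) (simp add: cf_one)
  then show ?case by simp
next
  case (insert x A)
  then show ?case by (simp add: dop_mult[OF assms(1)] algebra_simps)
qed


definition smul :: "nat \<Rightarrow> (nat \<Rightarrow> nat) \<Rightarrow> nat \<Rightarrow> nat" where
  "smul m u = (\<lambda>i. m * u i)"

lift_definition sub :: "real fps \<Rightarrow> (nat \<Rightarrow> nat) \<Rightarrow> ps" is
  "\<lambda>G u g. if fs g \<and> u \<noteq> (\<lambda>_. 0) \<and> (\<exists>m. g = smul m u) then G $ (THE m. g = smul m u) else 0"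
  by auto

lemma smul_inj: "u \<noteq> (\<lambda>_. 0) \<Longrightarrow> smul m u = smul m' u \<Longrightarrow> m = m'"
proof -
  assume "u \<noteq> (\<lambda>_. 0)" "smul m u = smul m' u"
  then obtain i where "u i \<noteq> 0" by auto
  moreover have "m * u i = m' * u i" using \<open>smul m u = smul m' u\<close> unfolding smul_def by metis
  ultimately show "m = m'" by simp
qed

lemma fs_smul: "fs u \<Longrightarrow> fs (smul m u)"
  unfolding fs_def smul_def by (rule finite_subset[rotated]) auto

lemma cf_sub_smul: "fs u \<Longrightarrow> u \<noteq> (\<lambda>_. 0) \<Longrightarrow> cf (sub G u) (smul m u) = G $ m"
proof -
  assume u: "fs u" "u \<noteq> (\<lambda>_. 0)"
  have "(THE m'. smul m u = smul m' u) = m"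
    using smul_inj[OF u(2)] by (intro the_equality) auto
  then show ?thesis using u by (transfer fixing: m) (auto simp: fs_smul)
qed

lemma cf_sub_other: "\<not> (\<exists>m. g = smul m u) \<Longrightarrow> cf (sub G u) g = 0"
  by transfer auto

lemma smul_le: "u \<noteq> (\<lambda>_. 0) \<Longrightarrow> smul i u \<le> smul m u \<longleftrightarrow> i \<le> m"
proof
  assume "u \<noteq> (\<lambda>_. 0)" "smul i u \<le> smul m u"
  then obtain k where "u k \<noteq> 0" by auto
  moreover have "i * u k \<le> m * u k" using \<open>smul i u \<le> smul m u\<close> by (auto simp: smul_def le_fun_def)
  ultimately show "i \<le> m" by simp
qed (auto simp: smul_def le_fun_def)

lemma smul_diff: "smul m u - smul i u = smul (m - i) u"
  by (simp add: smul_def fun_diff_def diff_mult_distrib)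

lemma smul_vadd: "vadd (smul i u) (smul j u) = smul (i + j) u"
  by (simp add: smul_def vadd_def add_mult_distrib)

lemma smul_0: "smul 0 u = (\<lambda>_. 0)" by (simp add: smul_def)

lemma sub_mult:
  assumes u: "fs u" "u \<noteq> (\<lambda>_. 0)"
  shows "sub (G * H) u = sub G u * sub H u"
proof (rule ps_eqI)
  fix g assume g: "fs g"
  show "cf (sub (G * H) u) g = cf (sub G u * sub H u) g"
  proof (cases "\<exists>m. g = smul m u")
    case True
    then obtain m where m: "g = smul m u" by blast
    have "cf (sub G u * sub H u) g = (\<Sum>w\<in>{w. w \<le> g}. cf (sub G u) w * cf (sub H u) (g - w))"
      using g by (simp add: cf_times)
    also have "\<dots> = (\<Sum>w\<in>(\<lambda>i. smul i u) ` {..m}. cf (sub G u) w * cf (sub H u) (g - w))"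
    proof (rule sum.mono_neutral_right)
      show "finite {w. w \<le> g}" using g by (rule finite_below)
      show "(\<lambda>i. smul i u) ` {..m} \<subseteq> {w. w \<le> g}" using m smul_le[OF u(2)] by auto
      show "\<forall>w\<in>{w. w \<le> g} - (\<lambda>i. smul i u) ` {..m}. cf (sub G u) w * cf (sub H u) (g - w) = 0"
      proof
        fix w assume w: "w \<in> {w. w \<le> g} - (\<lambda>i. smul i u) ` {..m}"
        show "cf (sub G u) w * cf (sub H u) (g - w) = 0"
        proof (cases "\<exists>i. w = smul i u")
          case True
          then obtain i where "w = smul i u" by blast
          then have "i \<le> m" using w m smul_le[OF u(2)] by auto
          then show ?thesis using w \<open>w = smul i u\<close> by auto
        qed (simp add: cf_sub_other)
      qed
    qed
    also have "\<dots> = (\<Sum>i\<in>{..m}. G $ i * H $ (m - i))"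
      apply (subst sum.reindex)
      using smul_inj[OF u(2)] apply (simp add: inj_on_def)
      by (simp add: m smul_diff cf_sub_smul[OF u])
    also have "\<dots> = (G * H) $ m" by (simp add: fps_mult_nth atLeast0AtMost)
    also have "\<dots> = cf (sub (G * H) u) g" by (simp add: m cf_sub_smul[OF u])
    finally show ?thesis ..
  next
    case False
    have "cf (sub G u * sub H u) g = (\<Sum>w\<in>{w. w \<le> g}. cf (sub G u) w * cf (sub H u) (g - w))"
      using g by (simp add: cf_times)
    also have "\<dots> = 0"
    proof (rule sum.neutral, rule ballI)
      fix w assume "w \<in> {w. w \<le> g}"
      then have wg: "g = vadd w (g - w)" by (auto simp: vadd_def fun_diff_def le_fun_def fun_eq_iff)
      show "cf (sub G u) w * cf (sub H u) (g - w) = 0"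
      proof (cases "(\<exists>i. w = smul i u) \<and> (\<exists>j. g - w = smul j u)")
        case True
        then obtain i j where "w = smul i u" "g - w = smul j u" by blast
        then have "g = smul (i + j) u" using wg smul_vadd by metis
        then show ?thesis using False by blast
      qed (auto simp: cf_sub_other)
    qed
    finally show ?thesis using False by (simp add: cf_sub_other)
  qed
qed

lemma sub_add: "sub (G + H) u = sub G u + sub H u"
  by (rule ps_eqI) (transfer, auto)

lemma sub_uminus: "sub (- G) u = - sub G u"
  by (rule ps_eqI) (transfer, auto)

lemma sub_diff: "sub (G - H) u = sub G u - sub H u"
  by (rule ps_eqI) (transfer, auto)

lemma sub_one: 
  assumes u: "fs u" "u \<noteq> (\<lambda>_. 0)"
  shows "sub 1 u = 1"
proof (rule ps_eqI)
  fix g assume g: "fs g"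
  show "cf (sub 1 u) g = cf 1 g"
  proof (cases "\<exists>m. g = smul m u")
    case True
    then obtain m where m: "g = smul m u" by blast
    have "g = (\<lambda>_. 0) \<longleftrightarrow> m = 0"
      using smul_inj[OF u(2), of m 0] by (auto simp: m smul_0)
    then show ?thesis by (simp add: m cf_sub_smul[OF u] cf_one)
  next
    case False
    then have "g \<noteq> (\<lambda>_. 0)" using smul_0 by metis
    then show ?thesis using False by (simp add: cf_sub_other cf_one)
  qed
qed

lemma sub_of_nat:
  assumes u: "fs u" "u \<noteq> (\<lambda>_. 0)"
  shows "sub (of_nat k) u = of_nat k"
  by (induction k) (simp_all add: sub_add sub_one[OF u], rule ps_eqI, transfer, auto)

lemma sub_zero: "sub 0 u = 0"
  by (rule ps_eqI) (transfer, auto)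


lemma addl_smul: "addl l \<Longrightarrow> l (smul m u) = real m * l u"
proof (induction m)
  case 0
  then show ?case by (simp add: smul_0 addl_zero)
next
  case (Suc m)
  have "smul (Suc m) u = vadd (smul m u) u" by (simp add: smul_def vadd_def add.commute)
  then have "l (smul (Suc m) u) = l (smul m u) + l u" using Suc.prems unfolding addl_def by metis
  then show ?case using Suc by (simp add: algebra_simps)
qed

lemma dop_sub:
  assumes l: "addl l" and u: "fs u" "u \<noteq> (\<lambda>_. 0)"
  shows "dop l (sub G u) = sub (fps_const (l u) * (fps_X * fps_deriv G)) u"
proof (rule ps_eqI)
  fix g assume g: "fs g"
  show "cf (dop l (sub G u)) g = cf (sub (fps_const (l u) * (fps_X * fps_deriv G)) u) g"
  proof (cases "\<exists>m. g = smul m u")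
    case True
    then obtain m where m: "g = smul m u" by blast
    show ?thesis
      by (cases m) (simp_all add: m cf_sub_smul[OF u] addl_smul[OF l] algebra_simps)
  qed (simp add: cf_sub_other)
qed

definition Gb :: "nat \<Rightarrow> real fps" where "Gb b = Abs_fps (nb b)"
definition Yf :: "real fps" where "Yf = Abs_fps (\<lambda>m. if m = 0 then 0 else 1)"
definition Ivf :: "real fps" where "Ivf = Abs_fps (\<lambda>_. 1)"

lemma Ivf_inv: "(1 - fps_X) * Ivf = 1"
  by (rule fps_ext) (simp add: Ivf_def algebra_simps)

lemma Yf_eq: "Yf = fps_X * Ivf"
  by (rule fps_ext) (simp add: Ivf_def Yf_def)

lemma nb_Suc: "nb b (Suc m) * real (Suc m) = nb b m * (real b + real m)"
proof -
  have f: "(fact m :: real) > 0" by simp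
  have "nb b (Suc m) * real (Suc m) = pochhammer (real b) m * (real b + real m) / (real (Suc m) * fact m) * real (Suc m)"
    by (simp only: nb_def pochhammer_Suc fact_Suc)
  also have "\<dots> = pochhammer (real b) m * (real b + real m) / fact m"
    using f by (simp add: field_simps del: of_nat_Suc)
  also have "\<dots> = nb b m * (real b + real m)" by (simp add: nb_def)
  finally show ?thesis .
qed

lemma nb_0: "nb b 0 = 1" by (simp add: nb_def)

lemma Gb_deriv_aux: "(1 - fps_X) * (fps_X * fps_deriv (Gb b)) = of_nat b * (fps_X * Gb b)"
proof (rule fps_ext)
  fix m
  show "((1 - fps_X) * (fps_X * fps_deriv (Gb b))) $ m = (of_nat b * (fps_X * Gb b)) $ m"
  proof (cases m)
    case 0 then show ?thesis by (simp add: algebra_simps fps_mult_nth)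
  next
    case (Suc k)
    have "((1 - fps_X) * (fps_X * fps_deriv (Gb b))) $ m = (fps_X * fps_deriv (Gb b)) $ m - (fps_X * (fps_X * fps_deriv (Gb b))) $ m"
      by (simp add: algebra_simps)
    also have "\<dots> = real (Suc k) * nb b (Suc k) - real k * nb b k"
      using Suc by (cases k) (simp_all add: Gb_def algebra_simps)
    also have "\<dots> = real b * nb b k" using nb_Suc[of b k] by (simp add: algebra_simps)
    also have "\<dots> = (of_nat b * (fps_X * Gb b)) $ m"
      using Suc by (simp add: Gb_def fps_of_nat[symmetric] del: fps_of_nat)
    finally show ?thesis .
  qed
qed

lemma Gb_deriv: "fps_X * fps_deriv (Gb b) = of_nat b * Yf * Gb b"
proof -
  have "fps_X * fps_deriv (Gb b) = ((1 - fps_X) * Ivf) * (fps_X * fps_deriv (Gb b))"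
    by (simp add: Ivf_inv)
  also have "\<dots> = Ivf * ((1 - fps_X) * (fps_X * fps_deriv (Gb b)))" by (simp add: algebra_simps)
  also have "\<dots> = of_nat b * Yf * Gb b" by (simp only: Gb_deriv_aux Yf_eq) (simp add: algebra_simps)
  finally show ?thesis .
qed


definition Sets :: "nat set \<Rightarrow> nat \<Rightarrow> nat set set" where
  "Sets N r = {R. R \<subseteq> N \<and> card R = r}"

lemma finite_Sets: "finite N \<Longrightarrow> finite (Sets N r)"
  unfolding Sets_def by (rule finite_subset[of _ "Pow N"]) auto

lemma choose2_Suc: "(Suc n choose 2) = n + (n choose 2)"
  by (simp add: numeral_2_eq_2)

lemma pair_sum:
  fixes w :: "nat \<Rightarrow> nat \<Rightarrow> 'r::comm_ring_1"
  assumes "finite T" "\<forall>j\<in>T. \<forall>k\<in>T. j \<noteq> k \<longrightarrow> w k j + w j k = -1"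
  shows "(\<Sum>k\<in>T. \<Sum>j\<in>T-{k}. w k j) = - of_nat (card T choose 2)"
  using assms
proof (induction T rule: finite_induct)
  case empty
  then show ?case by (simp add: numeral_2_eq_2)
next
  case (insert t T)
  have IH: "(\<Sum>k\<in>T. \<Sum>j\<in>T-{k}. w k j) = - of_nat (card T choose 2)"
    using insert by auto
  have "(\<Sum>k\<in>insert t T. \<Sum>j\<in>insert t T-{k}. w k j)
      = (\<Sum>j\<in>T. w t j) + (\<Sum>k\<in>T. \<Sum>j\<in>insert t (T-{k}). w k j)"
  proof -
    have "insert t T - {t} = T" using insert by auto
    moreover have "\<And>k. k \<in> T \<Longrightarrow> insert t T - {k} = insert t (T - {k})" using insert by auto
    ultimately show ?thesis using insert by (simp add: sum.insert)
  qed
  also have "\<dots> = (\<Sum>j\<in>T. w t j) + (\<Sum>k\<in>T. w k t + (\<Sum>j\<in>T-{k}. w k j))"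
    using insert by (intro arg_cong2[where f="(+)"] refl sum.cong) auto
  also have "\<dots> = (\<Sum>j\<in>T. w t j + w j t) + (\<Sum>k\<in>T. \<Sum>j\<in>T-{k}. w k j)"
    by (simp add: sum.distrib)
  also have "\<dots> = (\<Sum>j\<in>T. -1) + (\<Sum>k\<in>T. \<Sum>j\<in>T-{k}. w k j)"
    using insert.prems insert.hyps by (intro arg_cong2[where f="(+)"] refl sum.cong) auto
  also have "\<dots> = - of_nat (card (insert t T) choose 2)"
    using insert IH by (simp add: algebra_simps choose2_Suc)
  finally show ?case .
qed

lemma pair_sum_E:
  fixes w :: "nat \<Rightarrow> nat \<Rightarrow> 'r::comm_ring_1"
  assumes "finite S" "\<forall>j\<in>S. \<forall>k\<in>S. j \<noteq> k \<longrightarrow> y j * w k j + y k * w j k = y j * y k"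
  shows "(\<Sum>k\<in>S. \<Sum>j\<in>S-{k}. (\<Prod>i\<in>S-{k}. y i) * w k j) = of_nat (card S choose 2) * (\<Prod>i\<in>S. y i)"
  using assms
proof (induction S rule: finite_induct)
  case empty
  then show ?case by (simp add: numeral_2_eq_2)
next
  case (insert t T)
  have IH: "(\<Sum>k\<in>T. \<Sum>j\<in>T-{k}. (\<Prod>i\<in>T-{k}. y i) * w k j) = of_nat (card T choose 2) * (\<Prod>i\<in>T. y i)"
    using insert by auto
  have e1: "insert t T - {t} = T" using insert by auto
  have e2: "\<And>k. k \<in> T \<Longrightarrow> insert t T - {k} = insert t (T - {k})" using insert by auto
  have p1: "\<And>k. k \<in> T \<Longrightarrow> (\<Prod>i\<in>insert t (T - {k}). y i) = y t * (\<Prod>i\<in>T-{k}. y i)"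
    using insert by (simp add: prod.insert)
  have p2: "\<And>k. k \<in> T \<Longrightarrow> (\<Prod>i\<in>T. y i) = y k * (\<Prod>i\<in>T-{k}. y i)"
    using insert by (simp add: prod.remove)
  have "(\<Sum>k\<in>insert t T. \<Sum>j\<in>insert t T-{k}. (\<Prod>i\<in>insert t T-{k}. y i) * w k j)
      = (\<Sum>j\<in>T. (\<Prod>i\<in>T. y i) * w t j) + (\<Sum>k\<in>T. \<Sum>j\<in>insert t (T-{k}). (y t * (\<Prod>i\<in>T-{k}. y i)) * w k j)"
    using insert by (simp add: sum.insert e1 e2 p1 cong: sum.cong)
  also have "\<dots> = (\<Sum>j\<in>T. (\<Prod>i\<in>T. y i) * w t j) + (\<Sum>k\<in>T. (y t * (\<Prod>i\<in>T-{k}. y i)) * w k t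
        + y t * (\<Sum>j\<in>T-{k}. (\<Prod>i\<in>T-{k}. y i) * w k j))"
    using insert by (intro arg_cong2[where f="(+)"] refl sum.cong) (auto simp: sum_distrib_left algebra_simps)
  also have "\<dots> = (\<Sum>k\<in>T. (\<Prod>i\<in>T-{k}. y i) * (y k * w t k + y t * w k t))
        + y t * (\<Sum>k\<in>T. \<Sum>j\<in>T-{k}. (\<Prod>i\<in>T-{k}. y i) * w k j)"
    by (simp add: p2 sum.distrib sum_distrib_left algebra_simps cong: sum.cong)
  also have "\<dots> = (\<Sum>k\<in>T. (\<Prod>i\<in>T-{k}. y i) * (y k * y t))
        + y t * (\<Sum>k\<in>T. \<Sum>j\<in>T-{k}. (\<Prod>i\<in>T-{k}. y i) * w k j)"
    using insert.prems insert.hyps by (intro arg_cong2[where f="(+)"] refl sum.cong) auto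
  also have "\<dots> = of_nat (card T) * (y t * (\<Prod>i\<in>T. y i)) + y t * (of_nat (card T choose 2) * (\<Prod>i\<in>T. y i))"
  proof -
    have "(\<Sum>k\<in>T. (\<Prod>i\<in>T-{k}. y i) * (y k * y t)) = (\<Sum>k\<in>T. y t * (\<Prod>i\<in>T. y i))"
      by (rule sum.cong) (auto simp: p2 algebra_simps)
    then show ?thesis by (simp add: IH)
  qed
  also have "\<dots> = of_nat (card (insert t T) choose 2) * (\<Prod>i\<in>insert t T. y i)"
    using insert by (simp add: algebra_simps choose2_Suc)
  finally show ?case .
qed

lemma shift_sum:
  assumes "finite N"
  shows "(\<Sum>R\<in>Sets N r. \<Sum>k\<in>N-R. H R k) = (\<Sum>S\<in>Sets N (Suc r). \<Sum>k\<in>S. H (S - {k}) k)"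
proof -
  have fR: "finite (Sets N r)" "finite (Sets N (Suc r))" using assms by (auto intro: finite_Sets)
  have "(\<Sum>R\<in>Sets N r. \<Sum>k\<in>N-R. H R k) = (\<Sum>(R,k)\<in>Sigma (Sets N r) (\<lambda>R. N - R). H R k)"
    by (rule sum.Sigma) (use fR assms in auto)
  also have "\<dots> = (\<Sum>(S,k)\<in>Sigma (Sets N (Suc r)) (\<lambda>S. S). H (S - {k}) k)"
  proof (rule sum.reindex_bij_witness[of _ "\<lambda>(S,k). (S - {k}, k)" "\<lambda>(R,k). (insert k R, k)"])
    fix p assume p: "p \<in> Sigma (Sets N r) (\<lambda>R. N - R)"
    obtain R k where pk: "p = (R, k)" by (cases p)
    have R: "R \<subseteq> N" "card R = r" "k \<in> N" "k \<notin> R" using p pk by (auto simp: Sets_def)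
    have fin: "finite R" using R(1) assms finite_subset by blast
    show "(case case p of (R, k) \<Rightarrow> (insert k R, k) of (S, k) \<Rightarrow> (S - {k}, k)) = p"
      using pk R by auto
    show "(case p of (R, k) \<Rightarrow> (insert k R, k)) \<in> Sigma (Sets N (Suc r)) (\<lambda>S. S)"
      using pk R fin by (auto simp: Sets_def)
    show "(case case p of (R, k) \<Rightarrow> (insert k R, k) of (S, k) \<Rightarrow> H (S - {k}) k) = (case p of (R, k) \<Rightarrow> H R k)"
      using pk R by auto
  next
    fix p assume p: "p \<in> Sigma (Sets N (Suc r)) (\<lambda>S. S)"
    obtain S k where pk: "p = (S, k)" by (cases p)
    have S: "S \<subseteq> N" "card S = Suc r" "k \<in> S" using p pk by (auto simp: Sets_def)
    have fin: "finite S" using S(1) assms finite_subset by blast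
    show "(case case p of (S, k) \<Rightarrow> (S - {k}, k) of (R, k) \<Rightarrow> (insert k R, k)) = p"
      using pk S by auto
    show "(case p of (S, k) \<Rightarrow> (S - {k}, k)) \<in> Sigma (Sets N r) (\<lambda>R. N - R)"
      using pk S fin by (auto simp: Sets_def)
  qed
  also have "\<dots> = (\<Sum>S\<in>Sets N (Suc r). \<Sum>k\<in>S. H (S - {k}) k)"
    by (rule sum.Sigma[symmetric]) (use fR assms in \<open>auto simp: Sets_def intro: finite_subset\<close>)
  finally show ?thesis .
qed


lemma comb_main:
  fixes y :: "nat \<Rightarrow> 'r::comm_ring_1" and w :: "nat \<Rightarrow> nat \<Rightarrow> 'r" and B C :: 'r
  assumes N: "finite N"
    and w1: "\<forall>j\<in>N. \<forall>k\<in>N. j \<noteq> k \<longrightarrow> w k j + w j k = -1"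
    and w2: "\<forall>j\<in>N. \<forall>k\<in>N. j \<noteq> k \<longrightarrow> y j * w k j + y k * w j k = y j * y k"
  shows "(\<Sum>R\<in>Sets N r. \<Sum>k\<in>N-R. (\<Prod>i\<in>R. y i) * (B * y k + C * (\<Sum>j\<in>N-{k}. w k j)))
    = (B * of_nat (Suc r) + C * of_nat (Suc r choose 2)) * (\<Sum>S\<in>Sets N (Suc r). \<Prod>i\<in>S. y i)
      - C * of_nat (card N - r choose 2) * (\<Sum>R\<in>Sets N r. \<Prod>i\<in>R. y i)"
proof -
  let ?E = "\<lambda>R. \<Prod>i\<in>R. y i"
  have split: "(\<Sum>R\<in>Sets N r. \<Sum>k\<in>N-R. ?E R * (B * y k + C * (\<Sum>j\<in>N-{k}. w k j)))
     = B * (\<Sum>R\<in>Sets N r. \<Sum>k\<in>N-R. ?E R * y k)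
       + C * (\<Sum>R\<in>Sets N r. \<Sum>k\<in>N-R. ?E R * (\<Sum>j\<in>N-R-{k}. w k j))
       + C * (\<Sum>R\<in>Sets N r. \<Sum>k\<in>N-R. \<Sum>j\<in>R. ?E R * w k j)"
  proof -
    have "?E R * (B * y k + C * (\<Sum>j\<in>N-{k}. w k j))
        = B * (?E R * y k) + C * (?E R * (\<Sum>j\<in>N-R-{k}. w k j)) + C * (\<Sum>j\<in>R. ?E R * w k j)"
      if "R \<in> Sets N r" "k \<in> N - R" for R k
    proof -
      have RN: "R \<subseteq> N" using that by (auto simp: Sets_def)
      have fR: "finite R" using RN N finite_subset by blast
      have "N - {k} = (N - R - {k}) \<union> R" using that RN by auto
      then have "(\<Sum>j\<in>N-{k}. w k j) = (\<Sum>j\<in>N-R-{k}. w k j) + (\<Sum>j\<in>R. w k j)"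
        using N fR by (simp only:) (rule sum.union_disjoint, auto)
      then show ?thesis by (simp add: algebra_simps sum_distrib_left)
    qed
    then have "(\<Sum>R\<in>Sets N r. \<Sum>k\<in>N-R. ?E R * (B * y k + C * (\<Sum>j\<in>N-{k}. w k j)))
      = (\<Sum>R\<in>Sets N r. \<Sum>k\<in>N-R. B * (?E R * y k) + C * (?E R * (\<Sum>j\<in>N-R-{k}. w k j)) + C * (\<Sum>j\<in>R. ?E R * w k j))"
      by (intro sum.cong refl) auto
    also have "\<dots> = B * (\<Sum>R\<in>Sets N r. \<Sum>k\<in>N-R. ?E R * y k)
       + C * (\<Sum>R\<in>Sets N r. \<Sum>k\<in>N-R. ?E R * (\<Sum>j\<in>N-R-{k}. w k j))
       + C * (\<Sum>R\<in>Sets N r. \<Sum>k\<in>N-R. \<Sum>j\<in>R. ?E R * w k j)"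
      by (simp only: sum.distrib sum_distrib_left)
    finally show ?thesis .
  qed
  have T1: "(\<Sum>R\<in>Sets N r. \<Sum>k\<in>N-R. ?E R * y k) = of_nat (Suc r) * (\<Sum>S\<in>Sets N (Suc r). ?E S)"
  proof -
    have "(\<Sum>R\<in>Sets N r. \<Sum>k\<in>N-R. ?E R * y k) = (\<Sum>S\<in>Sets N (Suc r). \<Sum>k\<in>S. ?E (S - {k}) * y k)"
      by (rule shift_sum[OF N])
    also have "\<dots> = (\<Sum>S\<in>Sets N (Suc r). of_nat (Suc r) * ?E S)"
    proof (rule sum.cong[OF refl])
      fix S assume S: "S \<in> Sets N (Suc r)"
      then have fS: "finite S" using N by (auto simp: Sets_def intro: finite_subset)
      have "(\<Sum>k\<in>S. ?E (S - {k}) * y k) = (\<Sum>k\<in>S. ?E S)"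
        using fS by (intro sum.cong refl) (simp add: prod.remove algebra_simps)
      then show "(\<Sum>k\<in>S. ?E (S - {k}) * y k) = of_nat (Suc r) * ?E S"
        using S by (simp add: Sets_def)
    qed
    finally show ?thesis by (simp add: sum_distrib_left)
  qed
  have T2: "(\<Sum>R\<in>Sets N r. \<Sum>k\<in>N-R. ?E R * (\<Sum>j\<in>N-R-{k}. w k j))
      = - of_nat (card N - r choose 2) * (\<Sum>R\<in>Sets N r. ?E R)"
  proof -
    have "(\<Sum>R\<in>Sets N r. \<Sum>k\<in>N-R. ?E R * (\<Sum>j\<in>N-R-{k}. w k j)) = (\<Sum>R\<in>Sets N r. ?E R * (\<Sum>k\<in>N-R. \<Sum>j\<in>N-R-{k}. w k j))"
      by (simp only: sum_distrib_left)
    also have "(\<Sum>R\<in>Sets N r. ?E R * (\<Sum>k\<in>N-R. \<Sum>j\<in>N-R-{k}. w k j))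
        = (\<Sum>R\<in>Sets N r. ?E R * (- of_nat (card N - r choose 2)))"
    proof (rule sum.cong[OF refl])
      fix R assume R: "R \<in> Sets N r"
      then have RN: "R \<subseteq> N" "card R = r" by (auto simp: Sets_def)
      have "card (N - R) = card N - r" using RN N by (simp add: card_Diff_subset finite_subset)
      moreover have "(\<Sum>k\<in>N-R. \<Sum>j\<in>N-R-{k}. w k j) = - of_nat (card (N - R) choose 2)"
        using N w1 by (intro pair_sum) auto
      ultimately show "?E R * (\<Sum>k\<in>N-R. \<Sum>j\<in>N-R-{k}. w k j) = ?E R * (- of_nat (card N - r choose 2))"
        by simp
    qed
    also have "\<dots> = - of_nat (card N - r choose 2) * (\<Sum>R\<in>Sets N r. ?E R)"
      by (simp add: sum_distrib_right sum_negf mult.commute)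
    finally show ?thesis .
  qed
  have T3: "(\<Sum>R\<in>Sets N r. \<Sum>k\<in>N-R. \<Sum>j\<in>R. ?E R * w k j)
      = of_nat (Suc r choose 2) * (\<Sum>S\<in>Sets N (Suc r). ?E S)"
  proof -
    have "(\<Sum>R\<in>Sets N r. \<Sum>k\<in>N-R. \<Sum>j\<in>R. ?E R * w k j)
        = (\<Sum>S\<in>Sets N (Suc r). \<Sum>k\<in>S. \<Sum>j\<in>S - {k}. ?E (S - {k}) * w k j)"
      by (rule shift_sum[OF N])
    also have "\<dots> = (\<Sum>S\<in>Sets N (Suc r). of_nat (Suc r choose 2) * ?E S)"
    proof (rule sum.cong[OF refl])
      fix S assume S: "S \<in> Sets N (Suc r)"
      then have SN: "S \<subseteq> N" "card S = Suc r" by (auto simp: Sets_def)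
      then have fS: "finite S" using N finite_subset by blast
      show "(\<Sum>k\<in>S. \<Sum>j\<in>S - {k}. ?E (S - {k}) * w k j) = of_nat (Suc r choose 2) * ?E S"
        using pair_sum_E[OF fS, of y w] w2 SN by auto
    qed
    finally show ?thesis by (simp add: sum_distrib_left)
  qed
  show ?thesis
    unfolding split T1 T2 T3 by (simp add: algebra_simps)
qed


definition mu :: "nat \<Rightarrow> nat \<Rightarrow> nat \<Rightarrow> nat" where
  "mu n i = (\<lambda>l. if i \<le> l \<and> l < n then 1 else 0)"
definition nu :: "nat \<Rightarrow> nat \<Rightarrow> nat \<Rightarrow> nat" where
  "nu i j = (\<lambda>l. if i \<le> l \<and> l < j then 1 else 0)"
definition bk :: "nat \<Rightarrow> (nat \<Rightarrow> nat) \<Rightarrow> real" where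
  "bk k g = real (g k) - (if k = 0 then 0 else real (g (k - 1)))"

lemma addl_bk: "addl (bk k)"
  unfolding addl_def bk_def vadd_def by auto

lemma fs_mu: "fs (mu n i)"
  unfolding fs_def mu_def by (rule finite_subset[of _ "{..<n}"]) auto
lemma fs_nu: "fs (nu i j)"
  unfolding fs_def nu_def by (rule finite_subset[of _ "{..<j}"]) auto
lemma mu_nz: "i < n \<Longrightarrow> mu n i \<noteq> (\<lambda>_. 0)"
  unfolding mu_def by (metis less_irrefl order_refl zero_neq_one)
lemma nu_nz: "i < j \<Longrightarrow> nu i j \<noteq> (\<lambda>_. 0)"
  unfolding nu_def by (metis less_irrefl order_refl zero_neq_one)

lemma bk_mu: "k < n \<Longrightarrow> bk k (mu n i) = (if k = i then 1 else 0)"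
  unfolding bk_def mu_def by auto
lemma bk_nu: "i < j \<Longrightarrow> bk k (nu i j) = (if k = i then 1 else 0) - (if k = j then 1 else 0)"
  unfolding bk_def nu_def by auto

lemma mu_split: "k < j \<Longrightarrow> j < n \<Longrightarrow> mu n k = vadd (nu k j) (mu n j)"
  unfolding mu_def nu_def vadd_def by auto

definition xx :: "(nat \<Rightarrow> nat) \<Rightarrow> ps" where "xx u = sub fps_X u"
definition yy :: "(nat \<Rightarrow> nat) \<Rightarrow> ps" where "yy u = sub Yf u"
definition iv :: "(nat \<Rightarrow> nat) \<Rightarrow> ps" where "iv u = sub Ivf u"

lemma iv_inv: "fs u \<Longrightarrow> u \<noteq> (\<lambda>_. 0) \<Longrightarrow> (1 - xx u) * iv u = 1"
  using arg_cong[OF Ivf_inv, of "\<lambda>F. sub F u"]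
  by (simp add: sub_mult sub_diff sub_one xx_def iv_def)

lemma yy_eq: "fs u \<Longrightarrow> u \<noteq> (\<lambda>_. 0) \<Longrightarrow> yy u = xx u * iv u"
  by (simp add: yy_def xx_def iv_def Yf_eq sub_mult)

lemma cf_xx: "fs u \<Longrightarrow> u \<noteq> (\<lambda>_. 0) \<Longrightarrow> cf (xx u) g = (if g = u then 1 else 0)"
proof -
  assume u: "fs u" "u \<noteq> (\<lambda>_. 0)"
  have s1: "smul 1 u = u" by (simp add: smul_def)
  show ?thesis
  proof (cases "\<exists>m. g = smul m u")
    case True
    then obtain m where m: "g = smul m u" by blast
    have "g = u \<longleftrightarrow> m = 1" using smul_inj[OF u(2), of m 1] s1 m by auto
    then show ?thesis by (simp add: xx_def m cf_sub_smul[OF u])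
  next
    case False
    then have "g \<noteq> u" using s1 by metis
    then show ?thesis using False by (simp add: xx_def cf_sub_other)
  qed
qed

lemma xx_vadd:
  assumes u: "fs u" "u \<noteq> (\<lambda>_. 0)" and v: "fs v" "v \<noteq> (\<lambda>_. 0)"
  shows "xx (vadd u v) = xx u * xx v"
proof -
  have uv: "fs (vadd u v)" "vadd u v \<noteq> (\<lambda>_. 0)"
    using u v fs_vadd[OF u(1) v(1)] by (auto simp: vadd_def fun_eq_iff)
  show ?thesis
  proof (rule ps_eqI)
    fix g assume g: "fs g"
    have "cf (xx u * xx v) g = (\<Sum>w\<in>{w. w \<le> g}. (if w = u then 1 else 0) * (if g - w = v then 1 else 0))"
      using g by (simp add: cf_times cf_xx[OF u] cf_xx[OF v])
    also have "\<dots> = (\<Sum>w\<in>{w. w \<le> g}. if w = u then (if g - u = v then 1 else 0) else 0)"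
      by (intro sum.cong refl) auto
    also have "\<dots> = (if u \<le> g \<and> g - u = v then 1 else 0)"
      using finite_below[OF g] by (simp add: sum.delta)
    also have "\<dots> = (if g = vadd u v then 1 else 0)"
    proof -
      have "(u \<le> g \<and> g - u = v) \<longleftrightarrow> g = vadd u v"
      proof
        assume h: "u \<le> g \<and> g - u = v"
        show "g = vadd u v"
        proof
          fix x
          have "u x \<le> g x" "g x - u x = v x" using h by (auto simp: le_fun_def fun_diff_def fun_eq_iff)
          then show "g x = vadd u v x" by (simp add: vadd_def)
        qed
      qed (auto simp: vadd_def le_fun_def fun_diff_def)
      then show ?thesis by simp
    qed
    also have "\<dots> = cf (xx (vadd u v)) g" by (simp add: cf_xx[OF uv])
    finally show "cf (xx (vadd u v)) g = cf (xx u * xx v) g" ..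
  qed
qed

lemma sub_const_mult_one: "sub (fps_const 1 * F) u = sub F u" by simp
lemma sub_const_mult_mone: "sub (fps_const (-1) * F) u = - sub F u"
  by (simp add: sub_uminus fps_const_neg[symmetric])
lemma sub_const_mult_zero: "sub (fps_const 0 * F) u = 0" by (simp add: sub_zero)

lemma dop_Gb:
  assumes l: "addl l" and u: "fs u" "u \<noteq> (\<lambda>_. 0)"
  shows "l u = 1 \<Longrightarrow> dop l (sub (Gb b) u) = sub (Gb b) u * (of_nat b * yy u)"
    and "l u = -1 \<Longrightarrow> dop l (sub (Gb b) u) = sub (Gb b) u * (- (of_nat b * yy u))"
    and "l u = 0 \<Longrightarrow> dop l (sub (Gb b) u) = sub (Gb b) u * 0"
proof -
  have e: "dop l (sub (Gb b) u) = sub (fps_const (l u) * (of_nat b * Yf * Gb b)) u"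
    by (simp add: dop_sub[OF l u] Gb_deriv)
  have e2: "sub (of_nat b * Yf * Gb b) u = sub (Gb b) u * (of_nat b * yy u)"
    by (simp add: sub_mult[OF u] sub_of_nat[OF u] yy_def algebra_simps)
  show "l u = 1 \<Longrightarrow> dop l (sub (Gb b) u) = sub (Gb b) u * (of_nat b * yy u)"
    using e e2 by simp
  show "l u = -1 \<Longrightarrow> dop l (sub (Gb b) u) = sub (Gb b) u * (- (of_nat b * yy u))"
    using e e2 by (simp add: sub_const_mult_mone)
  show "l u = 0 \<Longrightarrow> dop l (sub (Gb b) u) = sub (Gb b) u * 0"
    using e by (simp add: sub_zero)
qed


definition Pp :: "nat \<Rightarrow> nat \<Rightarrow> nat \<Rightarrow> ps" where
  "Pp n b c = (\<Prod>i<n. sub (Gb b) (mu n i)) * (\<Prod>j<n. \<Prod>i<j. sub (Gb c) (nu i j))"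

definition ell :: "nat \<Rightarrow> nat \<Rightarrow> nat \<Rightarrow> nat \<Rightarrow> ps" where
  "ell n b c k = of_nat b * yy (mu n k)
     + of_nat c * ((\<Sum>j\<in>{k<..<n}. yy (nu k j)) - (\<Sum>i<k. yy (nu i k)))"

lemma double_sum_aux:
  fixes f :: "nat \<Rightarrow> nat \<Rightarrow> 'r::comm_ring_1"
  assumes "k < n"
  shows "(\<Sum>j<n. \<Sum>i<j. (if k = i then f i j else 0) - (if k = j then f i j else 0))
       = (\<Sum>j\<in>{k<..<n}. f k j) - (\<Sum>i<k. f i k)"
proof -
  have "(\<Sum>j<n. \<Sum>i<j. (if k = i then f i j else 0)) = (\<Sum>j<n. if k < j then f k j else 0)"
    by (intro sum.cong refl) (simp add: sum.delta)
  also have "\<dots> = (\<Sum>j\<in>{k<..<n}. f k j)"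
    by (simp add: sum.If_cases) (intro sum.cong, auto)
  finally have 1: "(\<Sum>j<n. \<Sum>i<j. (if k = i then f i j else 0)) = (\<Sum>j\<in>{k<..<n}. f k j)" .
  have "(\<Sum>j<n. \<Sum>i<j. (if k = j then f i j else 0)) = (\<Sum>j<n. if k = j then (\<Sum>i<j. f i j) else 0)"
    by (intro sum.cong refl) simp
  also have "\<dots> = (\<Sum>i<k. f i k)" using assms by (simp add: sum.delta)
  finally have 2: "(\<Sum>j<n. \<Sum>i<j. (if k = j then f i j else 0)) = (\<Sum>i<k. f i k)" .
  show ?thesis using 1 2 by (simp add: sum_subtractf)
qed

lemma dP:
  assumes k: "k < n"
  shows "dop (bk k) (Pp n b c) = Pp n b c * ell n b c k"
proof -
  let ?A = "\<Prod>i<n. sub (Gb b) (mu n i)"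
  let ?F = "\<lambda>j. \<Prod>i<j. sub (Gb c) (nu i j)"
  let ?hh = "\<lambda>i j. (if k = i then of_nat c * yy (nu i j) else 0) - (if k = j then of_nat c * yy (nu i j) else (0::ps))"
  have dA: "dop (bk k) ?A = ?A * (\<Sum>i<n. if i = k then of_nat b * yy (mu n i) else 0)"
  proof (rule dop_prod[OF addl_bk])
    fix i assume i: "i \<in> {..<n}"
    show "dop (bk k) (sub (Gb b) (mu n i)) = sub (Gb b) (mu n i) * (if i = k then of_nat b * yy (mu n i) else 0)"
    proof (cases "i = k")
      case True then show ?thesis using dop_Gb(1)[OF addl_bk fs_mu mu_nz] i k bk_mu by auto
    next
      case False then show ?thesis using dop_Gb(3)[OF addl_bk fs_mu mu_nz] i k bk_mu by auto
    qed
  qed simp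
  have dF: "dop (bk k) (?F j) = ?F j * (\<Sum>i<j. ?hh i j)" for j
  proof (rule dop_prod[OF addl_bk])
    fix i assume i: "i \<in> {..<j}"
    then have ij: "i < j" by simp
    show "dop (bk k) (sub (Gb c) (nu i j)) = sub (Gb c) (nu i j) * ?hh i j"
    proof (cases "k = i")
      case True then show ?thesis using dop_Gb(1)[OF addl_bk fs_nu nu_nz[OF ij]] ij bk_nu[OF ij] by auto
    next
      case False
      show ?thesis
      proof (cases "k = j")
        case True then show ?thesis using dop_Gb(2)[OF addl_bk fs_nu nu_nz[OF ij]] ij bk_nu[OF ij] \<open>k \<noteq> i\<close> by auto
      next
        case False then show ?thesis using dop_Gb(3)[OF addl_bk fs_nu nu_nz[OF ij]] ij bk_nu[OF ij] \<open>k \<noteq> i\<close> by auto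
      qed
    qed
  qed simp
  have dB: "dop (bk k) (\<Prod>j<n. ?F j) = (\<Prod>j<n. ?F j) * (\<Sum>j<n. \<Sum>i<j. ?hh i j)"
    by (rule dop_prod[OF addl_bk]) (use dF in auto)
  have s1: "(\<Sum>i<n. if i = k then of_nat b * yy (mu n i) else 0) = of_nat b * yy (mu n k)"
    using k by (simp add: sum.delta')
  have s2: "(\<Sum>j<n. \<Sum>i<j. ?hh i j) = of_nat c * ((\<Sum>j\<in>{k<..<n}. yy (nu k j)) - (\<Sum>i<k. yy (nu i k)))"
    using double_sum_aux[OF k, of "\<lambda>i j. of_nat c * yy (nu i j)"]
    by (simp add: sum_distrib_left right_diff_distrib)
  show ?thesis
    unfolding Pp_def dop_mult[OF addl_bk] dA dB s1 s2 ell_def by (simp add: algebra_simps)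
qed


definition ww :: "nat \<Rightarrow> nat \<Rightarrow> ps" where
  "ww k j = (if k < j then yy (nu k j) else - (1 + yy (nu j k)))"

lemma ww1: "j \<noteq> k \<Longrightarrow> ww k j + ww j k = -1"
  unfolding ww_def by (cases "k < j") auto

lemma key_identity:
  assumes kj: "k < j" and jn: "j < n"
  shows "yy (mu n j) * yy (nu k j) - yy (mu n k) * (1 + yy (nu k j)) = yy (mu n j) * yy (mu n k)"
proof -
  have kn: "k < n" using kj jn by simp
  let ?a = "xx (mu n j)" and ?ia = "iv (mu n j)" and ?q = "xx (nu k j)" and ?iq = "iv (nu k j)"
    and ?ik = "iv (mu n k)"
  have ha: "(1 - ?a) * ?ia = 1" by (rule iv_inv[OF fs_mu mu_nz[OF jn]])
  have hq: "(1 - ?q) * ?iq = 1" by (rule iv_inv[OF fs_nu nu_nz[OF kj]])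
  have xk: "xx (mu n k) = ?q * ?a"
    using mu_split[OF kj jn] xx_vadd[OF fs_nu nu_nz[OF kj] fs_mu mu_nz[OF jn]] by simp
  have hk: "(1 - ?q * ?a) * ?ik = 1" using iv_inv[OF fs_mu mu_nz[OF kn]] xk by simp
  have yj: "yy (mu n j) = ?a * ?ia" by (rule yy_eq[OF fs_mu mu_nz[OF jn]])
  have yq: "yy (nu k j) = ?q * ?iq" by (rule yy_eq[OF fs_nu nu_nz[OF kj]])
  have yk: "yy (mu n k) = ?q * ?a * ?ik" using yy_eq[OF fs_mu mu_nz[OF kn]] xk by simp
  have h1: "1 + ?q * ?iq = ?iq" using hq by (simp add: algebra_simps)
  have h2: "?ia - ?ik = ?ia * ?ik * ?a * (1 - ?q)"
  proof -
    have "?ia * ?ik * ?a * (1 - ?q) = ?ia * ((1 - ?q * ?a) * ?ik) - ((1 - ?a) * ?ia) * ?ik"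
      by (simp add: algebra_simps)
    also have "\<dots> = ?ia - ?ik" using hk ha by simp
    finally show ?thesis ..
  qed
  have "yy (mu n j) * yy (nu k j) - yy (mu n k) * (1 + yy (nu k j)) = ?a * ?q * ?iq * (?ia - ?ik)"
    unfolding yj yq yk h1 by (simp add: algebra_simps)
  also have "\<dots> = ?a * ?q * ?a * ?ia * ?ik * ((1 - ?q) * ?iq)"
    unfolding h2 by (simp add: algebra_simps)
  also have "\<dots> = yy (mu n j) * yy (mu n k)"
    unfolding hq yj yk by (simp add: algebra_simps)
  finally show ?thesis .
qed

lemma ww2:
  assumes "j \<noteq> k" "j < n" "k < n"
  shows "yy (mu n j) * ww k j + yy (mu n k) * ww j k = yy (mu n j) * yy (mu n k)"
proof (cases "k < j")
  case True
  then show ?thesis using key_identity[OF True assms(2)] unfolding ww_def by (simp add: algebra_simps)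
next
  case False
  then have "j < k" using assms by simp
  then show ?thesis using key_identity[OF \<open>j < k\<close> assms(3)] unfolding ww_def by (simp add: algebra_simps)
qed

lemma ell_ww:
  assumes k: "k < n"
  shows "ell n b c k = of_nat b * yy (mu n k) + of_nat c * (\<Sum>j\<in>{..<n}-{k}. ww k j) + of_nat c * of_nat k"
proof -
  have e: "{..<n} - {k} = {k<..<n} \<union> {..<k}" using k by auto
  have d: "{k<..<n} \<inter> {..<k} = {}" by auto
  have "(\<Sum>j\<in>{..<n}-{k}. ww k j) = (\<Sum>j\<in>{k<..<n}. ww k j) + (\<Sum>j\<in>{..<k}. ww k j)"
    unfolding e by (rule sum.union_disjoint[OF finite_greaterThanLessThan finite_lessThan d])
  also have "(\<Sum>j\<in>{k<..<n}. ww k j) = (\<Sum>j\<in>{k<..<n}. yy (nu k j))"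
    by (intro sum.cong refl) (simp add: ww_def)
  also have "(\<Sum>j\<in>{..<k}. ww k j) = (\<Sum>j\<in>{..<k}. - (1 + yy (nu j k)))"
    by (intro sum.cong refl) (simp add: ww_def)
  finally have h: "(\<Sum>j\<in>{..<n}-{k}. ww k j) = (\<Sum>j\<in>{k<..<n}. yy (nu k j)) - of_nat k - (\<Sum>j<k. yy (nu j k))"
    by (simp add: sum.distrib sum_negf sum_subtractf)
  show ?thesis unfolding ell_def h by (simp add: algebra_simps)
qed


lemma cf_of_nat_mult: "cf (of_nat m * f) g = real m * cf f g"
  by (induction m) (simp_all add: algebra_simps)

definition gs :: "nat \<Rightarrow> nat \<Rightarrow> nat \<Rightarrow> nat \<Rightarrow> nat" where
  "gs n a c = (\<lambda>l. if l < n then (\<Sum>k\<le>l. a - 1 + c * k) else 0)"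

lemma bk_gs: "k < n \<Longrightarrow> bk k (gs n a c) = real (a - 1 + c * k)"
  by (cases k) (simp_all add: bk_def gs_def)

definition LL :: "nat \<Rightarrow> nat \<Rightarrow> nat \<Rightarrow> ps \<Rightarrow> real" where
  "LL n a c h = cf h (gs n a c)"

lemma LL_dop: "k < n \<Longrightarrow> LL n a c (dop (bk k) h) = real (a - 1 + c * k) * LL n a c h"
  by (simp add: LL_def bk_gs)

lemma LL_add: "LL n a c (f + h) = LL n a c f + LL n a c h" by (simp add: LL_def)
lemma LL_diff: "LL n a c (f - h) = LL n a c f - LL n a c h" by (simp add: LL_def)
lemma LL_sum: "LL n a c (sum f A) = (\<Sum>x\<in>A. LL n a c (f x))" by (simp add: LL_def cf_sum)
lemma LL_of_nat: "LL n a c (of_nat m * f) = real m * LL n a c f" by (simp add: LL_def cf_of_nat_mult)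

definition EE :: "nat \<Rightarrow> nat set \<Rightarrow> ps" where
  "EE n R = (\<Prod>i\<in>R. yy (mu n i))"

definition AA :: "nat \<Rightarrow> nat \<Rightarrow> nat \<Rightarrow> nat \<Rightarrow> nat set \<Rightarrow> real" where
  "AA n a b c R = LL n a c (Pp n b c * EE n R)"

definition Ps :: "nat \<Rightarrow> nat \<Rightarrow> nat \<Rightarrow> nat \<Rightarrow> nat \<Rightarrow> real" where
  "Ps n a b c m = (\<Sum>S\<in>Sets {..<n} m. AA n a b c S)"

lemma dEE:
  assumes k: "k < n" and R: "R \<subseteq> {..<n}" "k \<notin> R"
  shows "dop (bk k) (EE n R) = 0"
proof -
  have fR: "finite R" using R(1) finite_subset by blast
  have "dop (bk k) (EE n R) = EE n R * (\<Sum>i\<in>R. 0)"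
    unfolding EE_def
  proof (rule dop_prod[OF addl_bk fR])
    fix i assume i: "i \<in> R"
    then have "i < n" "i \<noteq> k" using R by auto
    then have "bk k (mu n i) = 0" using bk_mu[OF k] by simp
    then show "dop (bk k) (yy (mu n i)) = yy (mu n i) * 0"
      using \<open>i < n\<close> by (simp add: yy_def dop_sub[OF addl_bk fs_mu mu_nz] sub_zero)
  qed
  then show ?thesis by simp
qed

lemma step_term:
  assumes k: "k < n" and R: "R \<subseteq> {..<n}" "k \<notin> R"
  shows "LL n a c (Pp n b c * EE n R * (of_nat b * yy (mu n k) + of_nat c * (\<Sum>j\<in>{..<n}-{k}. ww k j)))
       = real (a - 1) * AA n a b c R"
proof -
  have d: "dop (bk k) (Pp n b c * EE n R) = Pp n b c * EE n R * ell n b c k"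
    by (simp add: dop_mult[OF addl_bk] dP[OF k] dEE[OF k R] algebra_simps)
  have "LL n a c (Pp n b c * EE n R * ell n b c k) = real (a - 1 + c * k) * AA n a b c R"
    using LL_dop[OF k, of a c "Pp n b c * EE n R"] d by (simp add: AA_def)
  moreover have "Pp n b c * EE n R * ell n b c k
     = Pp n b c * EE n R * (of_nat b * yy (mu n k) + of_nat c * (\<Sum>j\<in>{..<n}-{k}. ww k j))
       + of_nat (c * k) * (Pp n b c * EE n R)"
    unfolding ell_ww[OF k] by (simp add: algebra_simps)
  ultimately show ?thesis
    by (simp add: LL_add LL_of_nat AA_def algebra_simps)
qed

lemma recurrence:
  assumes r: "r < n"
  shows "real (b * Suc r + c * (Suc r choose 2)) * Ps n a b c (Suc r)
         - real (c * (n - r choose 2)) * Ps n a b c r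
       = real (a - 1) * real (n - r) * Ps n a b c r"
proof -
  let ?N = "{..<n}"
  have cm: "(\<Sum>R\<in>Sets ?N r. \<Sum>k\<in>?N-R. EE n R * (of_nat b * yy (mu n k) + of_nat c * (\<Sum>j\<in>?N-{k}. ww k j)))
    = (of_nat b * of_nat (Suc r) + of_nat c * of_nat (Suc r choose 2)) * (\<Sum>S\<in>Sets ?N (Suc r). EE n S)
      - of_nat c * of_nat (card ?N - r choose 2) * (\<Sum>R\<in>Sets ?N r. EE n R)"
    unfolding EE_def
    by (rule comb_main) (auto simp: ww1 ww2)
  have "LL n a c (Pp n b c * (\<Sum>R\<in>Sets ?N r. \<Sum>k\<in>?N-R. EE n R * (of_nat b * yy (mu n k) + of_nat c * (\<Sum>j\<in>?N-{k}. ww k j))))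
      = (\<Sum>R\<in>Sets ?N r. \<Sum>k\<in>?N-R. real (a - 1) * AA n a b c R)"
    unfolding sum_distrib_left[of "Pp n b c"] LL_sum
  proof (intro sum.cong refl)
    fix R k assume R: "R \<in> Sets ?N r" and k: "k \<in> ?N - R"
    have "LL n a c (Pp n b c * (EE n R * (of_nat b * yy (mu n k) + of_nat c * (\<Sum>j\<in>?N-{k}. ww k j))))
      = LL n a c (Pp n b c * EE n R * (of_nat b * yy (mu n k) + of_nat c * (\<Sum>j\<in>?N-{k}. ww k j)))"
      by (simp only: mult.assoc)
    also have "\<dots> = real (a - 1) * AA n a b c R"
      using R k by (intro step_term) (auto simp: Sets_def)
    finally show "LL n a c (Pp n b c * (EE n R * (of_nat b * yy (mu n k) + of_nat c * (\<Sum>j\<in>?N-{k}. ww k j))))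
      = real (a - 1) * AA n a b c R" .
  qed
  also have "\<dots> = real (a - 1) * real (n - r) * Ps n a b c r"
  proof -
    have "\<And>R. R \<in> Sets ?N r \<Longrightarrow> card (?N - R) = n - r"
      by (auto simp: Sets_def card_Diff_subset finite_subset)
    then show ?thesis by (simp add: Ps_def sum_distrib_left mult.commute mult.left_commute)
  qed
  finally have lhs: "LL n a c (Pp n b c * (\<Sum>R\<in>Sets ?N r. \<Sum>k\<in>?N-R. EE n R * (of_nat b * yy (mu n k) + of_nat c * (\<Sum>j\<in>?N-{k}. ww k j))))
      = real (a - 1) * real (n - r) * Ps n a b c r" .
  have k1: "(of_nat b * of_nat (Suc r) + of_nat c * of_nat (Suc r choose 2) :: ps) = of_nat (b * Suc r + c * (Suc r choose 2))"
    by (simp only: of_nat_add of_nat_mult)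
  have k2: "(of_nat c * of_nat (card ?N - r choose 2) :: ps) = of_nat (c * (n - r choose 2))"
    by (simp only: of_nat_mult card_lessThan)
  have "LL n a c (Pp n b c * ((of_nat b * of_nat (Suc r) + of_nat c * of_nat (Suc r choose 2)) * (\<Sum>S\<in>Sets ?N (Suc r). EE n S)
      - of_nat c * of_nat (card ?N - r choose 2) * (\<Sum>R\<in>Sets ?N r. EE n R)))
    = LL n a c (of_nat (b * Suc r + c * (Suc r choose 2)) * (Pp n b c * (\<Sum>S\<in>Sets ?N (Suc r). EE n S))
      - of_nat (c * (n - r choose 2)) * (Pp n b c * (\<Sum>R\<in>Sets ?N r. EE n R)))"
    unfolding k1 k2 by (simp only: right_diff_distrib mult.assoc mult.left_commute)
  also have "\<dots> = real (b * Suc r + c * (Suc r choose 2)) * Ps n a b c (Suc r)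
         - real (c * (n - r choose 2)) * Ps n a b c r"
    by (simp only: LL_diff LL_of_nat LL_sum Ps_def AA_def sum_distrib_left[of "Pp n b c"])
  finally show ?thesis using lhs cm by simp
qed


lemma cf_sub_times:
  assumes u: "fs u" "u \<noteq> (\<lambda>_. 0)" and g: "fs g"
  shows "cf (sub G u * h) g = (\<Sum>i\<in>{i. smul i u \<le> g}. G $ i * cf h (g - smul i u))"
proof -
  obtain l0 where l0: "u l0 \<noteq> 0" using u(2) by auto
  have finI: "finite {i. smul i u \<le> g}"
  proof (rule finite_subset[of _ "{..g l0}"])
    show "{i. smul i u \<le> g} \<subseteq> {..g l0}"
    proof
      fix i assume "i \<in> {i. smul i u \<le> g}"
      then have "i * u l0 \<le> g l0" by (auto simp: smul_def le_fun_def)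
      moreover have "i \<le> i * u l0" using mult_le_mono2[of 1 "u l0" i] l0 by simp
      ultimately have "i \<le> g l0" by (rule order_trans[rotated])
      then show "i \<in> {..g l0}" by simp
    qed
  qed simp
  have "cf (sub G u * h) g = (\<Sum>w\<in>{w. w \<le> g}. cf (sub G u) w * cf h (g - w))"
    using g by (simp add: cf_times)
  also have "\<dots> = (\<Sum>w\<in>(\<lambda>i. smul i u) ` {i. smul i u \<le> g}. cf (sub G u) w * cf h (g - w))"
  proof (rule sum.mono_neutral_right)
    show "finite {w. w \<le> g}" using g by (rule finite_below)
    show "(\<lambda>i. smul i u) ` {i. smul i u \<le> g} \<subseteq> {w. w \<le> g}" by auto
    show "\<forall>w\<in>{w. w \<le> g} - (\<lambda>i. smul i u) ` {i. smul i u \<le> g}. cf (sub G u) w * cf h (g - w) = 0"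
    proof
      fix w assume w: "w \<in> {w. w \<le> g} - (\<lambda>i. smul i u) ` {i. smul i u \<le> g}"
      then have "\<not> (\<exists>i. w = smul i u)" by auto
      then show "cf (sub G u) w * cf h (g - w) = 0" by (simp add: cf_sub_other)
    qed
  qed
  also have "\<dots> = (\<Sum>i\<in>{i. smul i u \<le> g}. G $ i * cf h (g - smul i u))"
    apply (subst sum.reindex)
    using smul_inj[OF u(2)] apply (simp add: inj_on_def)
    by (simp add: cf_sub_smul[OF u])
  finally show ?thesis .
qed

definition Idx :: "'l set \<Rightarrow> ('l \<Rightarrow> nat \<Rightarrow> nat) \<Rightarrow> (nat \<Rightarrow> nat) \<Rightarrow> ('l \<Rightarrow> nat) set" where
  "Idx A U g = {e. (\<forall>x. x \<notin> A \<longrightarrow> e x = 0) \<and> (\<forall>l. g l = (\<Sum>x\<in>A. e x * U x l))}"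

lemma finite_Idx:
  assumes A: "finite A" and U: "\<forall>x\<in>A. U x \<noteq> (\<lambda>_. 0)" and g: "fs g"
  shows "finite (Idx A U g)"
proof -
  let ?M = "Max (g ` {i. g i \<noteq> 0})"
  have fin: "finite (g ` {i. g i \<noteq> 0})" using g unfolding fs_def by simp
  have "Idx A U g \<subseteq> {e. \<forall>x. (x \<in> A \<longrightarrow> e x \<in> {..?M}) \<and> (x \<notin> A \<longrightarrow> e x = 0)}"
  proof
    fix e assume e: "e \<in> Idx A U g"
    have "e x \<le> ?M" if x: "x \<in> A" for x
    proof -
      obtain l where l: "U x l \<noteq> 0" using U x by auto
      have "e x \<le> e x * U x l" using mult_le_mono2[of 1 "U x l" "e x"] l by simp
      also have "\<dots> \<le> (\<Sum>y\<in>A. e y * U y l)" using A x by (intro member_le_sum) auto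
      also have "\<dots> = g l" using e by (simp add: Idx_def)
      finally have le: "e x \<le> g l" .
      show ?thesis
      proof (cases "g l = 0")
        case True then show ?thesis using le by simp
      next
        case False then have "g l \<le> ?M" using fin by (intro Max_ge) auto
        then show ?thesis using le by simp
      qed
    qed
    then show "e \<in> {e. \<forall>x. (x \<in> A \<longrightarrow> e x \<in> {..?M}) \<and> (x \<notin> A \<longrightarrow> e x = 0)}"
      using e by (auto simp: Idx_def)
  qed
  moreover have "finite {e. \<forall>x. (x \<in> A \<longrightarrow> e x \<in> {..?M}) \<and> (x \<notin> A \<longrightarrow> e x = (0::nat))}"
    using A by (intro finite_set_of_finite_funs) auto
  ultimately show ?thesis by (rule finite_subset)
qed

lemma cf_prod_sub:
  assumes A: "finite A" and U: "\<forall>x\<in>A. fs (U x) \<and> U x \<noteq> (\<lambda>_. 0)"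
  shows "fs g \<Longrightarrow> cf (\<Prod>x\<in>A. sub (G x) (U x)) g = (\<Sum>e\<in>Idx A U g. \<Prod>x\<in>A. G x $ e x)"
  using A U
proof (induction A arbitrary: g rule: finite_induct)
  case empty
  have "Idx {} U g = (if g = (\<lambda>_. 0) then {\<lambda>_. 0} else {})"
    by (auto simp: Idx_def fun_eq_iff)
  then show ?case by (simp add: cf_one)
next
  case (insert t A)
  have ut: "fs (U t)" "U t \<noteq> (\<lambda>_. 0)" using insert.prems by auto
  have UA: "\<forall>x\<in>A. fs (U x) \<and> U x \<noteq> (\<lambda>_. 0)" using insert.prems by auto
  let ?I = "{i. smul i (U t) \<le> g}"
  let ?T = "\<lambda>e. \<Prod>x\<in>A. G x $ e x"
  have "cf (\<Prod>x\<in>insert t A. sub (G x) (U x)) g = cf (sub (G t) (U t) * (\<Prod>x\<in>A. sub (G x) (U x))) g"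
    using insert.hyps by simp
  also have "\<dots> = (\<Sum>i\<in>?I. G t $ i * cf (\<Prod>x\<in>A. sub (G x) (U x)) (g - smul i (U t)))"
    by (rule cf_sub_times[OF ut insert.prems(1)])
  also have "\<dots> = (\<Sum>i\<in>?I. G t $ i * (\<Sum>e\<in>Idx A U (g - smul i (U t)). ?T e))"
    by (rule sum.cong[OF refl], subst insert.IH[OF fs_diff[OF insert.prems(1)] UA], rule refl)
  also have "\<dots> = (\<Sum>(i,e)\<in>Sigma ?I (\<lambda>i. Idx A U (g - smul i (U t))). G t $ i * ?T e)"
    unfolding sum_distrib_left
  proof (rule sum.Sigma)
    obtain l0 where l0: "U t l0 \<noteq> 0" using ut(2) by auto
    show "finite ?I"
    proof (rule finite_subset[of _ "{..g l0}"])
      show "?I \<subseteq> {..g l0}"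
      proof
        fix i assume "i \<in> ?I"
        then have "i * U t l0 \<le> g l0" by (auto simp: smul_def le_fun_def)
        moreover have "i \<le> i * U t l0" using mult_le_mono2[of 1 "U t l0" i] l0 by simp
        ultimately have "i \<le> g l0" by (rule order_trans[rotated])
      then show "i \<in> {..g l0}" by simp
      qed
    qed simp
    show "\<forall>i\<in>?I. finite (Idx A U (g - smul i (U t)))"
      using UA insert.hyps(1) fs_diff[OF insert.prems(1)] by (auto intro: finite_Idx)
  qed
  also have "\<dots> = (\<Sum>e\<in>Idx (insert t A) U g. \<Prod>x\<in>insert t A. G x $ e x)"
  proof (rule sum.reindex_bij_witness[of _ "\<lambda>e. (e t, e(t := 0))" "\<lambda>(i,e). e(t := i)"])
    fix p assume p: "p \<in> Sigma ?I (\<lambda>i. Idx A U (g - smul i (U t)))"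
    obtain i e where pe: "p = (i, e)" by (cases p)
    have i: "smul i (U t) \<le> g" and e: "e \<in> Idx A U (g - smul i (U t))" using p pe by auto
    have et: "e t = 0" using e insert.hyps(2) by (auto simp: Idx_def)
    show "(\<lambda>e. (e t, e(t := 0))) ((case p of (i, e) \<Rightarrow> e(t := i))) = p"
      using pe et by (auto simp: fun_eq_iff)
    have sA: "(\<Sum>x\<in>A. (e(t := i)) x * U x l) = (\<Sum>x\<in>A. e x * U x l)" for l
      using insert.hyps(2) by (intro sum.cong) auto
    show "(case p of (i, e) \<Rightarrow> e(t := i)) \<in> Idx (insert t A) U g"
    proof -
      have "g l = i * U t l + (\<Sum>x\<in>A. e x * U x l)" for l
      proof -
        have "i * U t l \<le> g l" using i by (auto simp: smul_def le_fun_def)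
        moreover have "g l - i * U t l = (\<Sum>x\<in>A. e x * U x l)" using e by (auto simp: Idx_def smul_def fun_diff_def)
        ultimately show ?thesis by simp
      qed
      then show ?thesis using pe e insert.hyps sA by (auto simp: Idx_def)
    qed
    show "(\<Prod>x\<in>insert t A. G x $ (case p of (i, e) \<Rightarrow> e(t := i)) x) = (case p of (i, e) \<Rightarrow> G t $ i * ?T e)"
    proof -
      have "(\<Prod>x\<in>A. G x $ (e(t := i)) x) = ?T e" using insert.hyps(2) by (intro prod.cong) auto
      then show ?thesis using pe insert.hyps by simp
    qed
  next
    fix e assume e: "e \<in> Idx (insert t A) U g"
    show "(case (e t, e(t := 0)) of (i, e) \<Rightarrow> e(t := i)) = e" by simp
    have sA: "(\<Sum>x\<in>A. (e(t := 0)) x * U x l) = (\<Sum>x\<in>A. e x * U x l)" for l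
      using insert.hyps(2) by (intro sum.cong) auto
    have gl: "g l = e t * U t l + (\<Sum>x\<in>A. e x * U x l)" for l
      using e insert.hyps by (simp add: Idx_def)
    have ine: "e t * U t l \<le> g l" for l using gl[of l] by simp
    have dif: "g l - e t * U t l = (\<Sum>x\<in>A. e x * U x l)" for l using gl[of l] by simp
    have z: "\<forall>x. x \<notin> A \<longrightarrow> (e(t := 0)) x = 0" using e by (auto simp: Idx_def)
    have "e(t := 0) \<in> Idx A U (g - smul (e t) (U t))"
      unfolding Idx_def using z sA dif by (simp add: smul_def fun_diff_def)
    moreover have "smul (e t) (U t) \<le> g" using ine by (simp add: smul_def le_fun_def)
    ultimately show "(e t, e(t := 0)) \<in> Sigma ?I (\<lambda>i. Idx A U (g - smul i (U t)))"
      by simp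
  qed
  finally show ?case .
qed


datatype lab = LM nat | LP nat nat | LR nat

definition Lab :: "nat \<Rightarrow> nat set \<Rightarrow> lab set" where
  "Lab n S = LM ` {..<n} \<union> (\<lambda>(j,i). LP i j) ` (Sigma {..<n} (\<lambda>j. {..<j})) \<union> LR ` S"

definition Gl :: "nat \<Rightarrow> nat \<Rightarrow> lab \<Rightarrow> real fps" where
  "Gl b c x = (case x of LM i \<Rightarrow> Gb b | LP i j \<Rightarrow> Gb c | LR i \<Rightarrow> Yf)"

definition Ul :: "nat \<Rightarrow> lab \<Rightarrow> nat \<Rightarrow> nat" where
  "Ul n x = (case x of LM i \<Rightarrow> mu n i | LP i j \<Rightarrow> nu i j | LR i \<Rightarrow> mu n i)"

lemma finite_Lab: "finite S \<Longrightarrow> finite (Lab n S)"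
  unfolding Lab_def by auto

lemma lab_prod:
  fixes f :: "lab \<Rightarrow> 'a::comm_monoid_mult"
  assumes S: "finite S"
  shows "(\<Prod>x\<in>Lab n S. f x) = (\<Prod>i<n. f (LM i)) * (\<Prod>j<n. \<Prod>i<j. f (LP i j)) * (\<Prod>i\<in>S. f (LR i))"
proof -
  let ?A = "LM ` {..<n}" and ?B = "(\<lambda>(j,i). LP i j) ` (Sigma {..<n} (\<lambda>j. {..<j}))" and ?C = "LR ` S"
  have "(\<Prod>x\<in>Lab n S. f x) = (\<Prod>x\<in>?A \<union> ?B. f x) * (\<Prod>x\<in>?C. f x)"
    unfolding Lab_def using S by (intro prod.union_disjoint) auto
  also have "(\<Prod>x\<in>?A \<union> ?B. f x) = (\<Prod>x\<in>?A. f x) * (\<Prod>x\<in>?B. f x)"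
    by (intro prod.union_disjoint) auto
  also have "(\<Prod>x\<in>?A. f x) = (\<Prod>i<n. f (LM i))"
    by (subst prod.reindex) (auto simp: inj_on_def)
  also have "(\<Prod>x\<in>?B. f x) = (\<Prod>(j,i)\<in>Sigma {..<n} (\<lambda>j. {..<j}). f (LP i j))"
    by (subst prod.reindex) (auto simp: inj_on_def case_prod_beta)
  also have "\<dots> = (\<Prod>j<n. \<Prod>i<j. f (LP i j))"
    by (rule prod.Sigma[symmetric]) auto
  also have "(\<Prod>x\<in>?C. f x) = (\<Prod>i\<in>S. f (LR i))"
    by (subst prod.reindex) (auto simp: inj_on_def)
  finally show ?thesis .
qed

lemma lab_sum:
  fixes f :: "lab \<Rightarrow> 'a::comm_monoid_add"
  assumes S: "finite S"
  shows "(\<Sum>x\<in>Lab n S. f x) = (\<Sum>i<n. f (LM i)) + (\<Sum>j<n. \<Sum>i<j. f (LP i j)) + (\<Sum>i\<in>S. f (LR i))"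
proof -
  let ?A = "LM ` {..<n}" and ?B = "(\<lambda>(j,i). LP i j) ` (Sigma {..<n} (\<lambda>j. {..<j}))" and ?C = "LR ` S"
  have "(\<Sum>x\<in>Lab n S. f x) = (\<Sum>x\<in>?A \<union> ?B. f x) + (\<Sum>x\<in>?C. f x)"
    unfolding Lab_def using S by (intro sum.union_disjoint) auto
  also have "(\<Sum>x\<in>?A \<union> ?B. f x) = (\<Sum>x\<in>?A. f x) + (\<Sum>x\<in>?B. f x)"
    by (intro sum.union_disjoint) auto
  also have "(\<Sum>x\<in>?A. f x) = (\<Sum>i<n. f (LM i))"
    by (subst sum.reindex) (auto simp: inj_on_def)
  also have "(\<Sum>x\<in>?B. f x) = (\<Sum>(j,i)\<in>Sigma {..<n} (\<lambda>j. {..<j}). f (LP i j))"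
    by (subst sum.reindex) (auto simp: inj_on_def case_prod_beta)
  also have "\<dots> = (\<Sum>j<n. \<Sum>i<j. f (LP i j))"
    by (rule sum.Sigma[symmetric]) auto
  also have "(\<Sum>x\<in>?C. f x) = (\<Sum>i\<in>S. f (LR i))"
    by (subst sum.reindex) (auto simp: inj_on_def)
  finally show ?thesis .
qed

lemma Ul_ok: "S \<subseteq> {..<n} \<Longrightarrow> x \<in> Lab n S \<Longrightarrow> fs (Ul n x) \<and> Ul n x \<noteq> (\<lambda>_. 0)"
  unfolding Lab_def Ul_def by (auto simp: fs_mu fs_nu mu_nz nu_nz)

lemma PE_prod:
  assumes S: "S \<subseteq> {..<n}"
  shows "Pp n b c * EE n S = (\<Prod>x\<in>Lab n S. sub (Gl b c x) (Ul n x))"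
proof -
  have fS: "finite S" using S finite_subset by blast
  show ?thesis
    unfolding lab_prod[OF fS] Pp_def EE_def by (simp add: Gl_def Ul_def yy_def)
qed

lemma fs_gs: "fs (gs n a c)"
  unfolding fs_def gs_def by (rule finite_subset[of _ "{..<n}"]) auto

lemma AA_Idx:
  assumes S: "S \<subseteq> {..<n}"
  shows "AA n a b c S = (\<Sum>e\<in>Idx (Lab n S) (Ul n) (gs n a c). \<Prod>x\<in>Lab n S. Gl b c x $ e x)"
proof -
  have fS: "finite S" using S finite_subset by blast
  show ?thesis
    unfolding AA_def LL_def PE_prod[OF S]
    by (rule cf_prod_sub[OF finite_Lab[OF fS] _ fs_gs]) (use Ul_ok[OF S] in blast)
qed

lemma vec_eq_bk:
  assumes f: "\<forall>l\<ge>n. f l = 0" and h: "\<forall>l\<ge>n. h l = 0"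
  shows "(\<forall>l. f l = h l) \<longleftrightarrow> (\<forall>k<n. bk k f = bk k h)"
proof
  assume "\<forall>l. f l = h l" then show "\<forall>k<n. bk k f = bk k h" by (simp add: bk_def)
next
  assume b: "\<forall>k<n. bk k f = bk k h"
  have "l < n \<Longrightarrow> f l = h l" for l
  proof (induction l)
    case 0 then show ?case using b by (auto simp: bk_def)
  next
    case (Suc l)
    then have "f l = h l" by simp
    moreover have "bk (Suc l) f = bk (Suc l) h" using b Suc.prems by blast
    ultimately show ?case by (simp add: bk_def)
  qed
  then show "\<forall>l. f l = h l" using f h by (metis not_le)
qed

lemma bk_sum: "bk k (\<lambda>l. \<Sum>x\<in>A. e x * U x l) = (\<Sum>x\<in>A. real (e x) * bk k (U x))"
  unfolding bk_def by (simp add: sum_subtractf algebra_simps sum_distrib_left)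


lemma mem_Lab: "x \<in> Lab n S \<longleftrightarrow> (case x of LM i \<Rightarrow> i < n | LP i j \<Rightarrow> i < j \<and> j < n | LR i \<Rightarrow> i \<in> S)"
  unfolding Lab_def by (cases x) auto

definition phi :: "(lab \<Rightarrow> nat) \<Rightarrow> (nat \<Rightarrow> nat) \<times> (nat \<Rightarrow> nat) \<times> (nat \<Rightarrow> nat \<Rightarrow> nat)" where
  "phi e = (\<lambda>i. e (LM i), \<lambda>i. e (LR i), \<lambda>i j. e (LP i j))"

definition psi :: "(nat \<Rightarrow> nat) \<times> (nat \<Rightarrow> nat) \<times> (nat \<Rightarrow> nat \<Rightarrow> nat) \<Rightarrow> lab \<Rightarrow> nat" where
  "psi x = (case x of (m, r, p) \<Rightarrow> (\<lambda>y. case y of LM i \<Rightarrow> m i | LP i j \<Rightarrow> p i j | LR i \<Rightarrow> r i))"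

lemma phi_psi: "phi (psi x) = x"
  by (cases x) (simp add: phi_def psi_def)

lemma psi_phi: "psi (phi e) = e"
  by (rule ext, simp add: phi_def psi_def split: lab.split)

lemma xexp_real:
  "real_of_int (xexp n a c m r p k) = real (m k) + real (r k) + 1 - real a
     + (\<Sum>j\<in>{k<..<n}. real (p k j)) - (real c * real k + (\<Sum>i<k. real (p i k)))"
  by (simp add: xexp_def sum.distrib)

lemma eqn:
  assumes S: "S \<subseteq> {..<n}" and a: "0 < a" and e: "\<forall>x. x \<notin> Lab n S \<longrightarrow> e x = 0"
  shows "(\<forall>l. gs n a c l = (\<Sum>x\<in>Lab n S. e x * Ul n x l))
     \<longleftrightarrow> (\<forall>k<n. xexp n a c (\<lambda>i. e (LM i)) (\<lambda>i. e (LR i)) (\<lambda>i j. e (LP i j)) k = 0)"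
proof -
  have fS: "finite S" using S finite_subset by blast
  let ?V = "\<lambda>l. \<Sum>x\<in>Lab n S. e x * Ul n x l"
  have g0: "\<forall>l\<ge>n. gs n a c l = 0" by (simp add: gs_def)
  have V0: "\<forall>l\<ge>n. ?V l = 0"
  proof (intro allI impI)
    fix l assume l: "n \<le> l"
    have "Ul n x l = 0" if "x \<in> Lab n S" for x
      using that l unfolding mem_Lab by (cases x) (auto simp: Ul_def mu_def nu_def)
    then show "?V l = 0" by simp
  qed
  have step: "bk k (gs n a c) = bk k ?V \<longleftrightarrow> xexp n a c (\<lambda>i. e (LM i)) (\<lambda>i. e (LR i)) (\<lambda>i j. e (LP i j)) k = 0"
    if k: "k < n" for k
  proof -
    have "bk k ?V = (\<Sum>x\<in>Lab n S. real (e x) * bk k (Ul n x))" by (rule bk_sum)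
    also have "\<dots> = (\<Sum>i<n. real (e (LM i)) * bk k (mu n i))
        + (\<Sum>j<n. \<Sum>i<j. real (e (LP i j)) * bk k (nu i j))
        + (\<Sum>i\<in>S. real (e (LR i)) * bk k (mu n i))"
      unfolding lab_sum[OF fS] by (simp add: Ul_def)
    also have "(\<Sum>i<n. real (e (LM i)) * bk k (mu n i)) = real (e (LM k))"
    proof -
      have "(\<Sum>i<n. real (e (LM i)) * bk k (mu n i)) = (\<Sum>i<n. if k = i then real (e (LM i)) else 0)"
        by (intro sum.cong refl) (simp add: bk_mu[OF k])
      then show ?thesis using k by (simp add: sum.delta)
    qed
    also have "(\<Sum>i\<in>S. real (e (LR i)) * bk k (mu n i)) = real (e (LR k))"
    proof -
      have "(\<Sum>i\<in>S. real (e (LR i)) * bk k (mu n i)) = (\<Sum>i\<in>S. if k = i then real (e (LR i)) else 0)"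
        using k by (intro sum.cong refl) (simp add: bk_mu[OF k])
      also have "\<dots> = (if k \<in> S then real (e (LR k)) else 0)" using fS by (simp add: sum.delta)
      also have "\<dots> = real (e (LR k))" using e by (auto simp: mem_Lab)
      finally show ?thesis .
    qed
    also have "(\<Sum>j<n. \<Sum>i<j. real (e (LP i j)) * bk k (nu i j))
       = (\<Sum>j<n. \<Sum>i<j. (if k = i then real (e (LP i j)) else 0) - (if k = j then real (e (LP i j)) else 0))"
      by (intro sum.cong refl) (auto simp: bk_nu)
    also have "\<dots> = (\<Sum>j\<in>{k<..<n}. real (e (LP k j))) - (\<Sum>i<k. real (e (LP i k)))"
      by (rule double_sum_aux[OF k])
    finally have V: "bk k ?V = real (e (LM k)) + ((\<Sum>j\<in>{k<..<n}. real (e (LP k j))) - (\<Sum>i<k. real (e (LP i k)))) + real (e (LR k))" .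
    have G: "bk k (gs n a c) = real a - 1 + real c * real k"
      using bk_gs[OF k, of a c] a by simp
    have "xexp n a c (\<lambda>i. e (LM i)) (\<lambda>i. e (LR i)) (\<lambda>i j. e (LP i j)) k = 0
       \<longleftrightarrow> real_of_int (xexp n a c (\<lambda>i. e (LM i)) (\<lambda>i. e (LR i)) (\<lambda>i j. e (LP i j)) k) = 0"
      by simp
    also have "\<dots> \<longleftrightarrow> bk k (gs n a c) = bk k ?V"
      unfolding xexp_real V G by linarith
    finally show ?thesis ..
  qed
  have "(\<forall>l. gs n a c l = ?V l) \<longleftrightarrow> (\<forall>k<n. bk k (gs n a c) = bk k ?V)"
    by (rule vec_eq_bk[OF g0 V0])
  also have "\<dots> \<longleftrightarrow> (\<forall>k<n. xexp n a c (\<lambda>i. e (LM i)) (\<lambda>i. e (LR i)) (\<lambda>i j. e (LP i j)) k = 0)"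
    using step by blast
  finally show ?thesis .
qed


definition Wt :: "nat \<Rightarrow> nat \<Rightarrow> nat \<Rightarrow> (nat \<Rightarrow> nat) \<times> (nat \<Rightarrow> nat) \<times> (nat \<Rightarrow> nat \<Rightarrow> nat) \<Rightarrow> real" where
  "Wt n b c = (\<lambda>(m, r, p). (\<Prod>i<n. nb b (m i)) * (\<Prod>j<n. \<Prod>i<j. nb c (p i j)))"

lemma Psi_Wt: "Psi n k a b c = (\<Sum>x\<in>Psi_index n k a c. Wt n b c x)"
  unfolding Psi_def Wt_def ..

definition PsiS :: "nat \<Rightarrow> nat \<Rightarrow> nat \<Rightarrow> nat \<Rightarrow> nat set \<Rightarrow> ((nat \<Rightarrow> nat) \<times> (nat \<Rightarrow> nat) \<times> (nat \<Rightarrow> nat \<Rightarrow> nat)) set" where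
  "PsiS n k a c S = {x \<in> Psi_index n k a c. {i. i < n \<and> 0 < fst (snd x) i} = S}"

definition Idx' :: "nat \<Rightarrow> nat \<Rightarrow> nat \<Rightarrow> nat set \<Rightarrow> (lab \<Rightarrow> nat) set" where
  "Idx' n a c S = {e \<in> Idx (Lab n S) (Ul n) (gs n a c). \<forall>i\<in>S. e (LR i) \<noteq> 0}"

lemma prod_Gl:
  assumes fS: "finite S"
  shows "(\<Prod>x\<in>Lab n S. Gl b c x $ e x) = Wt n b c (phi e) * (\<Prod>i\<in>S. if e (LR i) = 0 then 0 else 1)"
  unfolding lab_prod[OF fS] by (simp add: Gl_def Gb_def Yf_def Wt_def phi_def)

lemma AA_Idx':
  assumes S: "S \<subseteq> {..<n}"
  shows "AA n a b c S = (\<Sum>e\<in>Idx' n a c S. Wt n b c (phi e))"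
proof -
  have fS: "finite S" using S finite_subset by blast
  have fI: "finite (Idx (Lab n S) (Ul n) (gs n a c))"
    by (rule finite_Idx[OF finite_Lab[OF fS] _ fs_gs]) (use Ul_ok[OF S] in blast)
  have "AA n a b c S = (\<Sum>e\<in>Idx (Lab n S) (Ul n) (gs n a c). Wt n b c (phi e) * (\<Prod>i\<in>S. if e (LR i) = 0 then 0 else 1))"
    unfolding AA_Idx[OF S] prod_Gl[OF fS] ..
  also have "\<dots> = (\<Sum>e\<in>Idx' n a c S. Wt n b c (phi e) * (\<Prod>i\<in>S. if e (LR i) = 0 then 0 else 1))"
  proof (rule sum.mono_neutral_right[OF fI])
    show "Idx' n a c S \<subseteq> Idx (Lab n S) (Ul n) (gs n a c)" by (auto simp: Idx'_def)
    show "\<forall>e\<in>Idx (Lab n S) (Ul n) (gs n a c) - Idx' n a c S. Wt n b c (phi e) * (\<Prod>i\<in>S. if e (LR i) = 0 then 0 else 1) = 0"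
    proof
      fix e assume "e \<in> Idx (Lab n S) (Ul n) (gs n a c) - Idx' n a c S"
      then obtain i where "i \<in> S" "e (LR i) = 0" by (auto simp: Idx'_def)
      then have "(\<Prod>i\<in>S. if e (LR i) = 0 then 0 else (1::real)) = 0" using fS by (intro prod_zero) auto
      then show "Wt n b c (phi e) * (\<Prod>i\<in>S. if e (LR i) = 0 then 0 else 1) = 0" by simp
    qed
  qed
  also have "\<dots> = (\<Sum>e\<in>Idx' n a c S. Wt n b c (phi e))"
  proof (intro sum.cong refl)
    fix e assume e: "e \<in> Idx' n a c S"
    have "(\<Prod>i\<in>S. if e (LR i) = 0 then 0 else 1) = (1::real)"
      by (rule prod.neutral) (use e in \<open>auto simp: Idx'_def\<close>)
    then show "Wt n b c (phi e) * (\<Prod>i\<in>S. if e (LR i) = 0 then 0 else 1) = Wt n b c (phi e)" by simp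
  qed
  finally show ?thesis .
qed

lemma image_Idx':
  assumes S: "S \<in> Sets {..<n} k" and a: "0 < a"
  shows "phi ` Idx' n a c S = PsiS n k a c S"
proof -
  have SN: "S \<subseteq> {..<n}" "card S = k" using S by (auto simp: Sets_def)
  show ?thesis
  proof
    show "phi ` Idx' n a c S \<subseteq> PsiS n k a c S"
    proof
      fix x assume "x \<in> phi ` Idx' n a c S"
      then obtain e where e: "e \<in> Idx' n a c S" and x: "x = phi e" by blast
      have z: "\<forall>y. y \<notin> Lab n S \<longrightarrow> e y = 0" and nz: "\<forall>i\<in>S. e (LR i) \<noteq> 0"
        and eq: "\<forall>l. gs n a c l = (\<Sum>y\<in>Lab n S. e y * Ul n y l)"
        using e by (auto simp: Idx'_def Idx_def)
      have xe: "\<forall>k<n. xexp n a c (\<lambda>i. e (LM i)) (\<lambda>i. e (LR i)) (\<lambda>i j. e (LP i j)) k = 0"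
        using eqn[OF SN(1) a z] eq by blast
      have m0: "\<forall>i. n \<le> i \<longrightarrow> e (LM i) = 0 \<and> e (LR i) = 0"
      proof (intro allI impI)
        fix i assume i: "n \<le> i"
        then have "i \<notin> S" using SN(1) by auto
        then have "LM i \<notin> Lab n S" "LR i \<notin> Lab n S" using i by (auto simp: mem_Lab)
        then show "e (LM i) = 0 \<and> e (LR i) = 0" using z by blast
      qed
      have p0: "\<forall>i j. \<not> (i < j \<and> j < n) \<longrightarrow> e (LP i j) = 0"
        using z by (auto simp: mem_Lab)
      have supp: "{i. i < n \<and> 0 < e (LR i)} = S"
      proof
        show "{i. i < n \<and> 0 < e (LR i)} \<subseteq> S"
        proof
          fix i assume i: "i \<in> {i. i < n \<and> 0 < e (LR i)}"
          show "i \<in> S"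
          proof (rule ccontr)
            assume "i \<notin> S"
            then have "LR i \<notin> Lab n S" by (simp add: mem_Lab)
            then show False using z i by auto
          qed
        qed
        show "S \<subseteq> {i. i < n \<and> 0 < e (LR i)}" using nz SN(1) by auto
      qed
      show "x \<in> PsiS n k a c S"
        unfolding x PsiS_def Psi_index_def phi_def using m0 p0 supp xe SN(2) by auto
    qed
  next
    show "PsiS n k a c S \<subseteq> phi ` Idx' n a c S"
    proof
      fix x assume x: "x \<in> PsiS n k a c S"
      obtain m r p where mrp: "x = (m, r, p)" by (cases x)
      have c1: "\<forall>i. n \<le> i \<longrightarrow> m i = 0 \<and> r i = 0" and c2: "\<forall>i j. \<not> (i < j \<and> j < n) \<longrightarrow> p i j = 0"
        and c3: "{i. i < n \<and> 0 < r i} = S" and c4: "\<forall>i<n. xexp n a c m r p i = 0"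
        using x mrp by (auto simp: PsiS_def Psi_index_def)
      let ?e = "psi x"
      have pe: "phi ?e = (m, r, p)" using phi_psi mrp by simp
      then have ev: "(\<lambda>i. ?e (LM i)) = m" "(\<lambda>i. ?e (LR i)) = r" "(\<lambda>i j. ?e (LP i j)) = p"
        by (simp_all add: phi_def)
      have z: "\<forall>y. y \<notin> Lab n S \<longrightarrow> ?e y = 0"
      proof (intro allI impI)
        fix y assume y: "y \<notin> Lab n S"
        show "?e y = 0"
        proof (cases y)
          case (LM i) then show ?thesis using y c1 by (auto simp: mem_Lab psi_def mrp)
        next
          case (LP i j) then show ?thesis using y c2 by (auto simp: mem_Lab psi_def mrp)
        next
          case (LR i) then show ?thesis using y c1 c3 by (cases "i < n") (auto simp: mem_Lab psi_def mrp)
        qed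
      qed
      have eq: "\<forall>l. gs n a c l = (\<Sum>y\<in>Lab n S. ?e y * Ul n y l)"
        using eqn[OF SN(1) a z] c4 ev by simp
      have nz: "\<forall>i\<in>S. ?e (LR i) \<noteq> 0" using c3 by (auto simp: psi_def mrp)
      have "?e \<in> Idx' n a c S" using z eq nz by (simp add: Idx'_def Idx_def)
      then show "x \<in> phi ` Idx' n a c S" using phi_psi[of x] by (metis imageI)
    qed
  qed
qed

lemma PsiS_sum:
  assumes S: "S \<in> Sets {..<n} k" and a: "0 < a"
  shows "(\<Sum>x\<in>PsiS n k a c S. Wt n b c x) = AA n a b c S"
proof -
  have SN: "S \<subseteq> {..<n}" using S by (auto simp: Sets_def)
  have "inj_on phi (Idx' n a c S)" by (metis inj_on_def psi_phi)
  then have "(\<Sum>x\<in>phi ` Idx' n a c S. Wt n b c x) = (\<Sum>e\<in>Idx' n a c S. Wt n b c (phi e))"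
    by (rule sum.reindex[unfolded comp_def])
  then show ?thesis using image_Idx'[OF S a] AA_Idx'[OF SN] by simp
qed

lemma finite_PsiS:
  assumes S: "S \<in> Sets {..<n} k" and a: "0 < a"
  shows "finite (PsiS n k a c S)"
proof -
  have SN: "S \<subseteq> {..<n}" using S by (auto simp: Sets_def)
  have fS: "finite S" using SN finite_subset by blast
  have "finite (Idx (Lab n S) (Ul n) (gs n a c))"
    by (rule finite_Idx[OF finite_Lab[OF fS] _ fs_gs]) (use Ul_ok[OF SN] in blast)
  then have "finite (Idx' n a c S)" by (rule finite_subset[rotated]) (auto simp: Idx'_def)
  then show ?thesis using image_Idx'[OF S a] by (metis finite_imageI)
qed

lemma Psi_Ps:
  assumes a: "0 < a"
  shows "Psi n k a b c = Ps n a b c k"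
proof -
  have U: "Psi_index n k a c = (\<Union>S\<in>Sets {..<n} k. PsiS n k a c S)"
  proof
    show "Psi_index n k a c \<subseteq> (\<Union>S\<in>Sets {..<n} k. PsiS n k a c S)"
    proof
      fix x assume x: "x \<in> Psi_index n k a c"
      let ?S = "{i. i < n \<and> 0 < fst (snd x) i}"
      have "card ?S = k" using x by (cases x) (auto simp: Psi_index_def)
      then have "?S \<in> Sets {..<n} k" by (auto simp: Sets_def)
      moreover have "x \<in> PsiS n k a c ?S" using x by (simp add: PsiS_def)
      ultimately show "x \<in> (\<Union>S\<in>Sets {..<n} k. PsiS n k a c S)" by blast
    qed
  qed (auto simp: PsiS_def)
  have "Psi n k a b c = (\<Sum>x\<in>(\<Union>S\<in>Sets {..<n} k. PsiS n k a c S). Wt n b c x)"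
    unfolding Psi_Wt U ..
  also have "\<dots> = (\<Sum>S\<in>Sets {..<n} k. \<Sum>x\<in>PsiS n k a c S. Wt n b c x)"
    apply (rule sum.UNION_disjoint)
      apply (simp add: finite_Sets)
     apply (use finite_PsiS[OF _ a] in blast)
    by (auto simp: PsiS_def)
  also have "\<dots> = Ps n a b c k"
    unfolding Ps_def by (intro sum.cong refl PsiS_sum[OF _ a])
  finally show ?thesis .
qed

lemma Mn_Psi0: "Mn n a b c = Psi n 0 a b c"
proof -
  let ?f = "\<lambda>(m, p). (m, (\<lambda>_. 0::nat), p)"
  have img: "?f ` M_index n a c = Psi_index n 0 a c"
  proof
    show "?f ` M_index n a c \<subseteq> Psi_index n 0 a c"
      by (auto simp: M_index_def Psi_index_def)
    show "Psi_index n 0 a c \<subseteq> ?f ` M_index n a c"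
    proof
      fix x assume x: "x \<in> Psi_index n 0 a c"
      obtain m r p where mrp: "x = (m, r, p)" by (cases x)
      have "{i. i < n \<and> 0 < r i} = {}" using x mrp by (auto simp: Psi_index_def)
      moreover have "\<forall>i. n \<le> i \<longrightarrow> r i = 0" using x mrp by (auto simp: Psi_index_def)
      ultimately have r0: "r = (\<lambda>_. 0)" by (auto simp: fun_eq_iff) (metis not_le neq0_conv)
      have "(m, p) \<in> M_index n a c" using x mrp r0 by (auto simp: Psi_index_def M_index_def)
      then show "x \<in> ?f ` M_index n a c" using mrp r0 by force
    qed
  qed
  have inj: "inj_on ?f (M_index n a c)" by (auto simp: inj_on_def)
  show ?thesis
    unfolding Mn_def Psi_def img[symmetric] sum.reindex[OF inj] by (simp add: case_prod_beta)
qed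


lemma choose2_real: "real (m choose 2) = real m * (real m - 1) / 2"
proof (induction m)
  case 0 then show ?case by (simp add: numeral_2_eq_2)
next
  case (Suc m) then show ?case by (simp add: choose2_Suc field_simps)
qed

lemma binom_step: "real (n choose Suc r) * real (Suc r) = real (n choose r) * real (n - r)"
proof -
  have "Suc r * (n choose Suc r) = (n - r) * (n choose r)"
    using binomial_absorption[of r n] binomial_absorb_comp[of n r] by simp
  then have "real (Suc r) * real (n choose Suc r) = real (n - r) * real (n choose r)"
    by (metis of_nat_mult)
  then show ?thesis by (simp only: mult.commute)
qed

lemma closed:
  assumes a: "0 < a" and b: "0 < b"
  shows "k \<le> n \<Longrightarrow> Ps n a b c k = real (n choose k) * Ps n a b c 0 *
      (\<Prod>j=1..k. (real a - 1 + (real n - real j) * real c / 2) / (real b + (real j - 1) * real c / 2))"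
proof (induction k)
  case 0 then show ?case by simp
next
  case (Suc r)
  have r: "r < n" using Suc.prems by simp
  let ?t = "\<lambda>j. (real a - 1 + (real n - real j) * real c / 2) / (real b + (real j - 1) * real c / 2)"
  let ?Pi = "\<Prod>j=1..r. ?t j"
  define D where "D = real b + real r * real c / 2"
  define Nn where "Nn = real a - 1 + (real n - real (Suc r)) * real c / 2"
  have D: "D > 0"
  proof -
    have "real r * real c / 2 \<ge> 0" by simp
    moreover have "real b > 0" using b by simp
    ultimately show ?thesis unfolding D_def by linarith
  qed
  have IH: "Ps n a b c r = real (n choose r) * Ps n a b c 0 * ?Pi" using Suc r by simp
  have rec: "real (b * Suc r + c * (Suc r choose 2)) * Ps n a b c (Suc r)
         - real (c * (n - r choose 2)) * Ps n a b c r
       = real (a - 1) * real (n - r) * Ps n a b c r" by (rule recurrence[OF r])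
  have K1: "real (b * Suc r + c * (Suc r choose 2)) = real (Suc r) * D"
    unfolding D_def by (simp add: choose2_real field_simps)
  have K2: "real (c * (n - r choose 2)) + real (a - 1) * real (n - r) = real (n - r) * Nn"
    unfolding Nn_def using r a by (simp add: choose2_real of_nat_diff field_simps)
  have "real (Suc r) * D * Ps n a b c (Suc r) = real (b * Suc r + c * (Suc r choose 2)) * Ps n a b c (Suc r)"
    using K1 by simp
  also have "\<dots> = real (a - 1) * real (n - r) * Ps n a b c r + real (c * (n - r choose 2)) * Ps n a b c r"
    using rec by linarith
  also have "\<dots> = (real (c * (n - r choose 2)) + real (a - 1) * real (n - r)) * Ps n a b c r"
    by (simp only: distrib_right add.commute)
  also have "\<dots> = real (n - r) * Nn * Ps n a b c r"
    using K2 by simp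
  finally have "real (Suc r) * D * Ps n a b c (Suc r) = real (n - r) * Nn * Ps n a b c r" .
  moreover have nz: "real (Suc r) * D \<noteq> 0" using D by simp
  ultimately have P1: "Ps n a b c (Suc r) = real (n - r) * Nn * Ps n a b c r / (real (Suc r) * D)"
    by (metis nonzero_mult_div_cancel_left)
  have tS: "?t (Suc r) = Nn / D" unfolding Nn_def D_def by simp
  have prodS: "(\<Prod>j=1..Suc r. ?t j) = ?Pi * (Nn / D)"
    using tS by (simp add: prod.nat_ivl_Suc' mult.commute)
  have bs: "real (n choose Suc r) = real (n choose r) * real (n - r) / real (Suc r)"
    using binom_step[of n r] by (simp add: field_simps)
  show ?case
    unfolding P1 IH prodS bs using D by (simp add: field_simps)
qed

theorem theorem1p8:
  fixes n a b c k :: nat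
  assumes "0 < n" and "0 < a" and "0 < b" and "k \<le> n"
  shows "Psi n k a b c =
    real (n choose k) * Mn n a b c *
      (\<Prod>j=1..k. (real a - 1 + (real n - real j) * real c / 2) /
                  (real b + (real j - 1) * real c / 2))"
  using closed[OF assms(2,3) assms(4)] Psi_Ps[OF assms(2)] Mn_Psi0 Psi_Ps[OF assms(2), of n 0 b c]
  by simp


end
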